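(* Let $m\ge2$ and work either in the PNS or in the PNGS setting described in the context. Let $\mathbb S^m\supset p^{m-1}\supset\cdots\supset p^1\supset p^0$ be a family of backward nested subspheres, i.e. $p^{l}\in P_l$ for $l=0,\ldots,m-1$, $p^{m-1}\in S_{\mathbb S^m}$ and $p^{l-1}\in S_{p^l}$ for $l=1,\ldots,m-1$. Then for all $0\le j'<j\le m-1$, $$\pi_{p^j,p^{j'}}\circ\pi_{\mathbb S^m,p^j}=\pi_{\mathbb S^m,p^{j'}}$$ (at every point of $\mathbb S^m$ where these maps are defined).
   Context: Notation: $\|\cdot\|$ Euclidean/Frobenius norm; $O(k,n)=\{v\in\mathbb R^{n\times k}:v^Tv=I_k\}$; $O(k)$ orthogonal group; $\mathbb D^k$ open unit ball and $\mathbb S^{k-1}$ unit sphere in $\mathbb R^k$. For $j\in\{1,\ldots,m-1\}$, PNS: $M_j=\{\binom{v}{\alpha^T}: v\in O(m-j,m+1),\alpha\in\mathbb D^{m-j}\}$; PNGS: same with $\alpha=0$. For $j=0$: $M_0=\{\binom{v}{\alpha^T}: v\in O(m,m+1),\alpha\in\mathbb S^{m-1}\}$. $P_j=M_j/O(m-j)$ (right action $z\mapsto zR$), with orbits $[z]$. An element $[\binom{v}{\alpha^T}]\in P_j$, $j\ge1$, represents the $j$-dimensional subsphere $\{x\in\mathbb S^m: v^Tx=\alpha\}$, and for $j=0$ the point $v\alpha$. $P_m=\{\mathbb S^m\}$ and $S_{\mathbb S^m}=P_{m-1}$. Nesting: for $p=[\binom{v}{\alpha^T}]\in P_j$ with $2\le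 j\le m-1$, $S_p$ is the set of all $[\binom{v\ \ v_{m-j+1}}{\alpha^T\ \ \alpha_{m-j+1}}]$ with $v_{m-j+1}\in\mathbb S^m$, $v^Tv_{m-j+1}=0$ and $\alpha_{m-j+1}\in\mathbb R$, $\alpha_{m-j+1}^2<1-\|\alpha\|^2$ (PNS) resp. $\alpha_{m-j+1}=0$ (PNGS); for $j=1$ the same with the condition $\alpha_m^2=1-\|\alpha\|^2$ instead. Projection onto $p=[\binom{v}{\alpha^T}]\in P_j$ ($0\le j\le m-1$): $\pi_{\mathbb S^m,p}(q)=v\alpha+\sqrt{1-\|\alpha\|^2}\,\frac{(I_{m+1}-vv^T)q}{\|(I_{m+1}-vv^T)q\|}$, defined whenever $(I_{m+1}-vv^T)q\neq0$ and independent of the representative (for $j=0$ this is the constant $v\alpha$). The same definitions with $m$ replaced by any $j$ give subspheres and projections $\pi_{\mathbb S^j,\cdot}$ for $\mathbb S^j\subset\mathbb R^{j+1}$. For $p^j=[\binom{v}{\alpha^T}]\in P_j$ choose $\tilde v\in O(j+1,m+1)$ with $(v,\tilde v)\in O(m+1)$ and define $g_{p^j,\mathbb S^j}:p^j\to\mathbb S^j$, $y\mapsto \tilde v^Ty/\|\tilde v^Ty\|$, a bijection with inverse $z\mapsto v\alpha+\sqrt{1-\|\alpha\|^2}\,\tilde vz$. For a subsphere $p^{j'}\subset p^j$ of the nested family, $p'_{j'}:=g_{p^j,\mathbb S^j}(p^{j'})$ is a $j'$-dimensional subsphere of $\mathbb S^j$, and $\pi_{p^j,p^{j'}}:=g_{p^j,\mathbb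 S^j}^{-1}\circ\pi_{\mathbb S^j,p'_{j'}}\circ g_{p^j,\mathbb S^j}:p^j\to p^{j'}$ (independent of the choice of $\tilde v$). *)

theory Defs
  imports Complex_Main
begin

text \<open>Vectors of R^n are represented as functions nat => real vanishing at
  indices >= n (dimension varies inside the statement: R^(m+1) and R^(j+1)).
  A matrix in R^(n x k) is a family of k column vectors (nat => vec), with
  columns of index >= k set to zero.  A representative z = (v, alpha) of an
  element of M_j stands for the (n+1) x k matrix (v ; alpha^T).\<close>

type_synonym vec = "nat \<Rightarrow> real"
type_synonym rep = "(nat \<Rightarrow> vec) \<times> (nat \<Rightarrow> real)"

definition inR :: "nat \<Rightarrow> vec \<Rightarrow> bool" where
  "inR n x \<longleftrightarrow> (\<forall>i\<ge>n. x i = 0)"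

definition dot :: "nat \<Rightarrow> vec \<Rightarrow> vec \<Rightarrow> real" where
  "dot n x y = (\<Sum>i<n. x i * y i)"

definition vnorm :: "nat \<Rightarrow> vec \<Rightarrow> real" where
  "vnorm n x = sqrt (dot n x x)"

definition Sph :: "nat \<Rightarrow> vec set" where
  "Sph d = {x. inR (Suc d) x \<and> dot (Suc d) x x = 1}"

definition sqn :: "nat \<Rightarrow> (nat \<Rightarrow> real) \<Rightarrow> real" where
  "sqn k a = (\<Sum>i<k. (a i)^2)"

definition Ost :: "nat \<Rightarrow> nat \<Rightarrow> (nat \<Rightarrow> vec) set" where
  "Ost k n = {v. (\<forall>a<k. inR n (v a)) \<and>
                 (\<forall>a<k. \<forall>b<k. dot n (v a) (v b) = (if a = b then 1 else 0)) \<and>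
                 (\<forall>a\<ge>k. v a = (\<lambda>_. 0))}"

definition Og :: "nat \<Rightarrow> (nat \<Rightarrow> nat \<Rightarrow> real) set" where
  "Og k = {R. (\<forall>a<k. \<forall>b<k. (\<Sum>c<k. R c a * R c b) = (if a = b then 1 else 0)) \<and>
              (\<forall>a b. (k \<le> a \<or> k \<le> b) \<longrightarrow> R a b = 0)}"

definition lin :: "(nat \<Rightarrow> vec) \<Rightarrow> (nat \<Rightarrow> real) \<Rightarrow> nat \<Rightarrow> vec" where
  "lin v c k = (\<lambda>i. \<Sum>a<k. c a * v a i)"

definition act :: "nat \<Rightarrow> rep \<Rightarrow> (nat \<Rightarrow> nat \<Rightarrow> real) \<Rightarrow> rep" where
  "act k z R = (\<lambda>b. if b < k then lin (fst z) (\<lambda>a. R a b) k else (\<lambda>_. 0),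
                \<lambda>b. if b < k then (\<Sum>a<k. snd z a * R a b) else 0)"

definition orbit :: "nat \<Rightarrow> rep \<Rightarrow> rep set" where
  "orbit k z = {act k z R | R. R \<in> Og k}"

text \<open>M_j for the sphere S^d (k = d - j columns); geo = True is the PNGS
  setting, geo = False the PNS setting.\<close>
definition Mset :: "bool \<Rightarrow> nat \<Rightarrow> nat \<Rightarrow> rep set" where
  "Mset geo d j = {(v, \<alpha>). v \<in> Ost (d - j) (Suc d) \<and> (\<forall>a\<ge>d - j. \<alpha> a = 0) \<and>
      (if j = 0 then sqn (d - j) \<alpha> = 1
       else if geo then (\<forall>a. \<alpha> a = 0) else sqn (d - j) \<alpha> < 1)}"

definition Pset :: "bool \<Rightarrow> nat \<Rightarrow> nat \<Rightarrow> rep set set" where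
  "Pset geo d j = (\<lambda>z. orbit (d - j) z) ` Mset geo d j"

definition rep_of :: "rep set \<Rightarrow> rep" where
  "rep_of p = (SOME z. z \<in> p)"

definition subsph :: "nat \<Rightarrow> nat \<Rightarrow> rep \<Rightarrow> vec set" where
  "subsph d j z = (if j = 0 then {lin (fst z) (snd z) d}
     else {x \<in> Sph d. \<forall>a<d - j. dot (Suc d) (fst z a) x = snd z a})"

definition subsphP :: "nat \<Rightarrow> nat \<Rightarrow> rep set \<Rightarrow> vec set" where
  "subsphP d j p = subsph d j (rep_of p)"

definition residual :: "nat \<Rightarrow> nat \<Rightarrow> (nat \<Rightarrow> vec) \<Rightarrow> vec \<Rightarrow> vec" where
  "residual d k v q = (\<lambda>i. q i - (\<Sum>a<k. dot (Suc d) (v a) q * v a i))"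

definition proj :: "nat \<Rightarrow> nat \<Rightarrow> rep \<Rightarrow> vec \<Rightarrow> vec" where
  "proj d j z q = (\<lambda>i. lin (fst z) (snd z) (d - j) i +
      sqrt (1 - sqn (d - j) (snd z)) * residual d (d - j) (fst z) q i /
        vnorm (Suc d) (residual d (d - j) (fst z) q))"

text \<open>Domain of definition (for j = 0 the projection is the constant v alpha).\<close>
definition proj_ok :: "nat \<Rightarrow> nat \<Rightarrow> rep \<Rightarrow> vec \<Rightarrow> bool" where
  "proj_ok d j z q \<longleftrightarrow> j = 0 \<or> vnorm (Suc d) (residual d (d - j) (fst z) q) \<noteq> 0"

definition projP :: "nat \<Rightarrow> nat \<Rightarrow> rep set \<Rightarrow> vec \<Rightarrow> vec" where
  "projP d j p q = proj d j (rep_of p) q"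

definition projP_ok :: "nat \<Rightarrow> nat \<Rightarrow> rep set \<Rightarrow> vec \<Rightarrow> bool" where
  "projP_ok d j p q \<longleftrightarrow> proj_ok d j (rep_of p) q"

definition children :: "bool \<Rightarrow> nat \<Rightarrow> nat \<Rightarrow> rep set \<Rightarrow> rep set set" where
  "children geo m j p =
     {orbit (Suc (m - j)) ((fst z)(m - j := w), (snd z)(m - j := b)) | z w b.
        z \<in> p \<and> w \<in> Sph m \<and> (\<forall>a<m - j. dot (Suc m) (fst z a) w = 0) \<and>
        (if j = 1 then b^2 = 1 - sqn (m - j) (snd z)
         else if geo then b = 0 else b^2 < 1 - sqn (m - j) (snd z))}"

definition children_top :: "bool \<Rightarrow> nat \<Rightarrow> rep set set" where
  "children_top geo m = Pset geo m (m - 1)"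

definition complement :: "nat \<Rightarrow> nat \<Rightarrow> (nat \<Rightarrow> vec) \<Rightarrow> (nat \<Rightarrow> vec)" where
  "complement m j v = (SOME vt. vt \<in> Ost (Suc j) (Suc m) \<and>
      (\<lambda>a. if a < m - j then v a else vt (a - (m - j))) \<in> Ost (Suc m) (Suc m))"

definition tmul :: "nat \<Rightarrow> nat \<Rightarrow> (nat \<Rightarrow> vec) \<Rightarrow> vec \<Rightarrow> vec" where
  "tmul m j vt y = (\<lambda>c. if c < Suc j then dot (Suc m) (vt c) y else 0)"

definition gmap :: "nat \<Rightarrow> nat \<Rightarrow> rep set \<Rightarrow> vec \<Rightarrow> vec" where
  "gmap m j p y = (let vt = complement m j (fst (rep_of p)) in
      (\<lambda>c. tmul m j vt y c / vnorm (Suc j) (tmul m j vt y)))"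

definition gmap_ok :: "nat \<Rightarrow> nat \<Rightarrow> rep set \<Rightarrow> vec \<Rightarrow> bool" where
  "gmap_ok m j p y \<longleftrightarrow> vnorm (Suc j) (tmul m j (complement m j (fst (rep_of p))) y) \<noteq> 0"

definition ginv :: "nat \<Rightarrow> nat \<Rightarrow> rep set \<Rightarrow> vec \<Rightarrow> vec" where
  "ginv m j p x = (let z = rep_of p; vt = complement m j (fst z) in
      (\<lambda>i. lin (fst z) (snd z) (m - j) i +
           sqrt (1 - sqn (m - j) (snd z)) * lin vt x (Suc j) i))"

definition image_class :: "bool \<Rightarrow> nat \<Rightarrow> nat \<Rightarrow> nat \<Rightarrow> rep set \<Rightarrow> rep set \<Rightarrow> rep set" where
  "image_class geo m j j' pj pj' =
     (SOME P'. P' \<in> Pset geo j j' \<and> subsphP j j' P' = gmap m j pj ` subsphP m j' pj')"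

definition pi_btw :: "bool \<Rightarrow> nat \<Rightarrow> nat \<Rightarrow> nat \<Rightarrow> rep set \<Rightarrow> rep set \<Rightarrow> vec \<Rightarrow> vec" where
  "pi_btw geo m j j' pj pj' y =
     ginv m j pj (projP j j' (image_class geo m j j' pj pj') (gmap m j pj y))"

definition pi_btw_ok :: "bool \<Rightarrow> nat \<Rightarrow> nat \<Rightarrow> nat \<Rightarrow> rep set \<Rightarrow> rep set \<Rightarrow> vec \<Rightarrow> bool" where
  "pi_btw_ok geo m j j' pj pj' y \<longleftrightarrow> gmap_ok m j pj y \<and>
     projP_ok j j' (image_class geo m j j' pj pj') (gmap m j pj y)"

end

theory Submission
  imports Defs
begin

lemma dot_commute: "dot n x y = dot n y x" by (simp add: dot_def mult.commute)

lemma dot_lin_right: "dot n x (lin V f k) = (\<Sum>a<k. f a * dot n x (V a))"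
  unfolding dot_def lin_def
  by (simp add: sum_distrib_left mult.assoc mult.left_commute, rule sum.swap)

lemma dot_lin_left: "dot n (lin V f k) x = (\<Sum>a<k. f a * dot n (V a) x)"
  using dot_lin_right[of n x V f k] by (simp add: dot_commute)

lemma dot_add_right: "dot n x (\<lambda>i. y i + z i) = dot n x y + dot n x z"
  by (simp add: dot_def distrib_left sum.distrib)
lemma dot_add_left: "dot n (\<lambda>i. y i + z i) x = dot n y x + dot n z x"
  by (simp add: dot_def distrib_right sum.distrib)
lemma dot_diff_right: "dot n x (\<lambda>i. y i - z i) = dot n x y - dot n x z"
  by (simp add: dot_def right_diff_distrib sum_subtractf)
lemma dot_diff_left: "dot n (\<lambda>i. y i - z i) x = dot n y x - dot n z x"
  by (simp add: dot_def left_diff_distrib sum_subtractf)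
lemma dot_scale_right: "dot n x (\<lambda>i. c * y i) = c * dot n x y"
  by (simp add: dot_def sum_distrib_left mult.left_commute)
lemma dot_scale_left: "dot n (\<lambda>i. c * y i) x = c * dot n y x"
  by (simp add: dot_def sum_distrib_left mult.assoc)
lemma dot_div_right: "dot n x (\<lambda>i. y i / c) = dot n x y / c"
  by (simp add: dot_def sum_divide_distrib)
lemma dot_div_left: "dot n (\<lambda>i. y i / c) x = dot n y x / c"
  by (simp add: dot_def sum_divide_distrib)
lemma dot_self_nonneg: "dot n x x \<ge> 0"
  by (simp add: dot_def sum_nonneg)

definition orthon :: "nat \<Rightarrow> (nat \<Rightarrow> vec) \<Rightarrow> nat \<Rightarrow> bool" where
  "orthon n V k \<longleftrightarrow> (\<forall>a<k. \<forall>b<k. dot n (V a) (V b) = (if a = b then 1 else 0))"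

lemma Ost_orthon: "V \<in> Ost k n \<Longrightarrow> orthon n V k"
  by (simp add: Ost_def orthon_def)

lemma orthon_dot_lin: "orthon n V k \<Longrightarrow> b < k \<Longrightarrow> dot n (V b) (lin V f k) = f b"
proof -
  assume o: "orthon n V k" and b: "b < k"
  have "(\<Sum>a<k. f a * dot n (V b) (V a)) = (\<Sum>a<k. if a = b then f a else 0)"
    by (rule sum.cong) (use o b in \<open>auto simp: orthon_def\<close>)
  also have "\<dots> = f b" using b by simp
  finally show ?thesis by (simp add: dot_lin_right)
qed

lemma orthon_lin_lin: "orthon n V k \<Longrightarrow> dot n (lin V f k) (lin V g k) = (\<Sum>a<k. f a * g a)"
  by (simp add: dot_lin_left orthon_dot_lin)

lemma bessel:
  assumes "orthon n V k"
  shows "dot n (\<lambda>i. x i - lin V (\<lambda>a. dot n (V a) x) k i) (\<lambda>i. x i - lin V (\<lambda>a. dot n (V a) x) k i)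
     = dot n x x - (\<Sum>a<k. (dot n (V a) x)^2)"
proof -
  have l: "dot n (lin V (\<lambda>a. dot n (V a) x) k) x = (\<Sum>a<k. (dot n (V a) x)^2)"
    by (simp add: dot_lin_left power2_eq_square)
  have l2: "dot n x (lin V (\<lambda>a. dot n (V a) x) k) = (\<Sum>a<k. (dot n (V a) x)^2)"
    using l dot_commute by metis
  show ?thesis
    by (simp only: dot_diff_left dot_diff_right orthon_lin_lin[OF assms] l l2 power2_eq_square[symmetric])
qed

definition ev :: "nat \<Rightarrow> vec" where "ev i = (\<lambda>t. if t = i then 1 else 0)"

lemma dot_ev_right: "i < n \<Longrightarrow> dot n x (ev i) = x i"
  by (simp add: dot_def ev_def if_distrib cong: if_cong)
lemma dot_ev_left: "i < n \<Longrightarrow> dot n (ev i) x = x i"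
  using dot_ev_right dot_commute by metis

lemma orthon_sumsq:
  assumes "orthon n V k"
  shows "(\<Sum>i<n. \<Sum>a<k. (V a i)^2) = real k"
proof -
  have "(\<Sum>i<n. \<Sum>a<k. (V a i)^2) = (\<Sum>a<k. \<Sum>i<n. (V a i)^2)" by (rule sum.swap)
  also have "\<dots> = (\<Sum>a<k. 1)"
    by (rule sum.cong) (use assms in \<open>auto simp: orthon_def dot_def power2_eq_square\<close>)
  finally show ?thesis by simp
qed

lemma bessel_ev:
  assumes "orthon n V k" "i < n"
  shows "dot n (\<lambda>t. ev i t - lin V (\<lambda>a. dot n (V a) (ev i)) k t) (\<lambda>t. ev i t - lin V (\<lambda>a. dot n (V a) (ev i)) k t)
     = 1 - (\<Sum>a<k. (V a i)^2)"
proof -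
  have "dot n (ev i) (ev i) = 1" using assms(2) by (simp add: dot_ev_right, simp add: ev_def)
  then show ?thesis using bessel[OF assms(1), of "ev i"] assms(2) by (simp add: dot_ev_right)
qed

lemma dot_zero_imp:
  assumes "dot n x x = 0" "t < n" shows "x t = 0"
proof -
  have "(\<Sum>i<n. x i * x i) = 0" using assms(1) by (simp add: dot_def)
  then have "\<forall>i\<in>{..<n}. x i * x i = 0" by (subst sum_nonneg_eq_0_iff[symmetric]) auto
  then show ?thesis using assms(2) by auto
qed

lemma extend_exists:
  assumes o: "orthon n V k" and inr: "\<forall>a<k. inR n (V a)" and kn: "k < n"
  shows "\<exists>w. inR n w \<and> dot n w w = 1 \<and> (\<forall>a<k. dot n (V a) w = 0)"
proof -
  define r where "r i = (\<lambda>t. ev i t - lin V (\<lambda>a. dot n (V a) (ev i)) k t)" for i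
  have "\<exists>i<n. dot n (r i) (r i) > 0"
  proof (rule ccontr)
    assume neg: "\<not> ?thesis"
    have h: "1 \<le> (\<Sum>a<k. (V a i)^2)" if "i < n" for i
    proof -
      have "dot n (r i) (r i) \<le> 0" using neg that by auto
      then show ?thesis using bessel_ev[OF o that] unfolding r_def by linarith
    qed
    have "(\<Sum>i<n. (1::real)) \<le> (\<Sum>i<n. \<Sum>a<k. (V a i)^2)"
      by (rule sum_mono) (use h in auto)
    then show False using orthon_sumsq[OF o] kn by simp
  qed
  then obtain i where i: "i < n" and pos: "dot n (r i) (r i) > 0" by auto
  define w where "w = (\<lambda>t. r i t / sqrt (dot n (r i) (r i)))"
  have "inR n w" using inr i unfolding w_def r_def inR_def ev_def lin_def by auto
  moreover have "dot n w w = 1"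
    using pos unfolding w_def by (simp add: dot_div_left dot_div_right)
  moreover have "\<forall>a<k. dot n (V a) w = 0"
  proof (intro allI impI)
    fix a assume a: "a < k"
    have "dot n (V a) (r i) = 0"
      unfolding r_def using a i by (simp add: dot_diff_right orthon_dot_lin[OF o] dot_ev_right)
    then show "dot n (V a) w = 0" unfolding w_def by (simp add: dot_div_right)
  qed
  ultimately show ?thesis by blast
qed

lemma square_complete_ev:
  assumes o: "orthon n V n" and inr: "\<forall>a<n. inR n (V a)" and i: "i < n" and t: "t < n"
  shows "(\<Sum>a<n. V a i * V a t) = (if i = t then 1 else 0)"
proof -
  define r where "r i = (\<lambda>t. ev i t - lin V (\<lambda>a. dot n (V a) (ev i)) n t)" for i
  have nn: "0 \<le> 1 - (\<Sum>a<n. (V a i)^2)" if "i < n" for i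
    by (subst bessel_ev[OF o that, symmetric]) (rule dot_self_nonneg)
  have "(\<Sum>i<n. 1 - (\<Sum>a<n. (V a i)^2)) = 0"
    using orthon_sumsq[OF o] by (simp add: sum_subtractf)
  then have "\<forall>i\<in>{..<n}. 1 - (\<Sum>a<n. (V a i)^2) = 0"
    by (subst sum_nonneg_eq_0_iff[symmetric]) (use nn in auto)
  then have "dot n (r i) (r i) = 0" using bessel_ev[OF o i] i unfolding r_def by auto
  then have "r i t = 0" using dot_zero_imp t by blast
  then have "ev i t = (\<Sum>a<n. V a i * V a t)" unfolding r_def lin_def using i
    by (simp add: dot_ev_right mult.commute)
  then show ?thesis by (simp add: ev_def eq_commute)
qed

lemma square_complete:
  assumes o: "orthon n V n" and inr: "\<forall>a<n. inR n (V a)" and x: "inR n x"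
  shows "x t = (\<Sum>a<n. dot n (V a) x * V a t)"
proof (cases "t < n")
  case False
  then show ?thesis using x inr by (simp add: inR_def)
next
  case True
  have "(\<Sum>a<n. dot n (V a) x * V a t) = (\<Sum>a<n. \<Sum>i<n. x i * (V a i * V a t))"
    by (simp add: dot_def sum_distrib_left sum_distrib_right mult_ac)
  also have "\<dots> = (\<Sum>i<n. \<Sum>a<n. x i * (V a i * V a t))" by (rule sum.swap)
  also have "\<dots> = (\<Sum>i<n. x i * (if i = t then 1 else 0))"
    by (rule sum.cong) (use square_complete_ev[OF o inr _ True] in \<open>auto simp: sum_distrib_left[symmetric]\<close>)
  also have "\<dots> = x t" using True by (simp add: if_distrib cong: if_cong)
  finally show ?thesis by simp
qed

lemma square_parseval:
  assumes o: "orthon n V n" and inr: "\<forall>a<n. inR n (V a)" and x: "inR n x"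
  shows "dot n x y = (\<Sum>a<n. dot n (V a) x * dot n (V a) y)"
proof -
  define L where "L = lin V (\<lambda>a. dot n (V a) x) n"
  have "x = L" unfolding L_def lin_def using square_complete[OF o inr x] by (auto simp: mult.commute)
  then have "dot n x y = dot n L y" by simp
  then show ?thesis unfolding L_def by (simp add: dot_lin_left)
qed

section \<open>Orthogonal group\<close>

lemma Og_cols: "R \<in> Og k \<Longrightarrow> orthon k (\<lambda>b c. R c b) k \<and> (\<forall>a<k. inR k (\<lambda>c. R c a))"
  by (auto simp: Og_def orthon_def dot_def inR_def)

lemma Og_rows:
  assumes "R \<in> Og k" "c < k" "c' < k"
  shows "(\<Sum>b<k. R c b * R c' b) = (if c = c' then 1 else 0)"
  using square_complete_ev[of k "\<lambda>b c. R c b" c c'] Og_cols[OF assms(1)] assms(2,3) by simp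

lemma lincomb_inv:
  assumes R: "R \<in> Og k" and h: "\<forall>b<k. (\<Sum>a<k. R a b * f a) = (\<Sum>a<k. R a b * g a)" and c: "c < k"
  shows "f c = g c"
proof -
  have key: "(\<Sum>b<k. R c b * (\<Sum>a<k. R a b * u a)) = u c" for u
  proof -
    have "(\<Sum>b<k. R c b * (\<Sum>a<k. R a b * u a)) = (\<Sum>b<k. \<Sum>a<k. u a * (R c b * R a b))"
      by (simp add: sum_distrib_left mult_ac)
    also have "\<dots> = (\<Sum>a<k. \<Sum>b<k. u a * (R c b * R a b))" by (rule sum.swap)
    also have "\<dots> = (\<Sum>a<k. u a * (if c = a then 1 else 0))"
      by (rule sum.cong) (use Og_rows[OF R c] in \<open>auto simp: sum_distrib_left[symmetric]\<close>)
    also have "\<dots> = u c" using c by (simp add: if_distrib cong: if_cong)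
    finally show ?thesis .
  qed
  have "(\<Sum>b<k. R c b * (\<Sum>a<k. R a b * f a)) = (\<Sum>b<k. R c b * (\<Sum>a<k. R a b * g a))"
    by (rule sum.cong) (use h in auto)
  then show ?thesis using key[of f] key[of g] by simp
qed

lemma act_fst: "b < k \<Longrightarrow> fst (act k z R) b = lin (fst z) (\<lambda>a. R a b) k"
  by (simp add: act_def)
lemma act_snd: "b < k \<Longrightarrow> snd (act k z R) b = (\<Sum>a<k. snd z a * R a b)"
  by (simp add: act_def)

lemma act_dot: "b < k \<Longrightarrow> dot n (fst (act k z R) b) x = (\<Sum>a<k. R a b * dot n (fst z a) x)"
  by (simp add: act_fst dot_lin_left)

lemma act_cset:
  assumes R: "R \<in> Og k"
  shows "(\<forall>b<k. dot n (fst (act k z R) b) x = snd (act k z R) b) \<longleftrightarrow> (\<forall>a<k. dot n (fst z a) x = snd z a)"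
proof
  assume h: "\<forall>a<k. dot n (fst z a) x = snd z a"
  show "\<forall>b<k. dot n (fst (act k z R) b) x = snd (act k z R) b"
    using h by (auto simp: act_dot act_snd mult.commute intro!: sum.cong)
next
  assume h: "\<forall>b<k. dot n (fst (act k z R) b) x = snd (act k z R) b"
  have "\<forall>b<k. (\<Sum>a<k. R a b * dot n (fst z a) x) = (\<Sum>a<k. R a b * snd z a)"
    using h by (auto simp: act_dot act_snd mult.commute)
  then show "\<forall>a<k. dot n (fst z a) x = snd z a"
    using lincomb_inv[OF R, of "\<lambda>a. dot n (fst z a) x" "snd z"] by blast
qed

lemma act_orth:
  assumes R: "R \<in> Og k"
  shows "(\<forall>b<k. dot n (fst (act k z R) b) x = 0) \<longleftrightarrow> (\<forall>a<k. dot n (fst z a) x = 0)"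
proof
  assume h: "\<forall>a<k. dot n (fst z a) x = 0"
  show "\<forall>b<k. dot n (fst (act k z R) b) x = 0"
    using h by (auto simp: act_dot)
next
  assume h: "\<forall>b<k. dot n (fst (act k z R) b) x = 0"
  have "\<forall>b<k. (\<Sum>a<k. R a b * dot n (fst z a) x) = (\<Sum>a<k. R a b * (\<lambda>_. 0) a)"
    using h by (auto simp: act_dot)
  then show "\<forall>a<k. dot n (fst z a) x = 0"
    using lincomb_inv[OF R, of "\<lambda>a. dot n (fst z a) x" "\<lambda>_. 0"] by auto
qed

lemma sqn_dot: "sqn k a = dot k a a"
  by (simp add: sqn_def dot_def power2_eq_square)

lemma act_sqn:
  assumes R: "R \<in> Og k" and z: "\<forall>a\<ge>k. snd z a = 0"
  shows "sqn k (snd (act k z R)) = sqn k (snd z)"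
proof -
  have inr: "inR k (snd z)" using z by (simp add: inR_def)
  have "sqn k (snd (act k z R)) = (\<Sum>b<k. (dot k (\<lambda>c. R c b) (snd z))^2)"
    unfolding sqn_def by (rule sum.cong) (auto simp: act_snd dot_def mult.commute)
  also have "\<dots> = dot k (snd z) (snd z)"
    using square_parseval[of k "\<lambda>b c. R c b", OF _ _ inr] Og_cols[OF R] by (simp add: power2_eq_square)
  finally show ?thesis by (simp add: sqn_dot)
qed

lemma act_Ost:
  assumes R: "R \<in> Og k" and V: "fst z \<in> Ost k n"
  shows "fst (act k z R) \<in> Ost k n"
proof -
  have o: "orthon n (fst z) k" using V by (rule Ost_orthon)
  have "dot n (fst (act k z R) a) (fst (act k z R) b) = (if a = b then 1 else 0)" if "a < k" "b < k" for a b
  proof -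
    have "dot n (fst (act k z R) a) (fst (act k z R) b) = (\<Sum>c<k. R c a * R c b)"
      using that by (simp add: act_fst orthon_lin_lin[OF o])
    then show ?thesis using R that by (simp add: Og_def)
  qed
  moreover have "inR n (fst (act k z R) a)" if "a < k" for a
    using V that by (simp add: act_fst Ost_def inR_def lin_def)
  ultimately show ?thesis by (simp add: Ost_def act_def)
qed

definition "Id_Og k = (\<lambda>a b. if a = b \<and> a < k then 1 else (0::real))"

lemma Id_Og: "Id_Og k \<in> Og k"
proof -
  have "(\<Sum>c<k. Id_Og k c a * Id_Og k c b) = (if a = b then 1 else 0)" if "a < k" "b < k" for a b
  proof -
    have "(\<Sum>c<k. Id_Og k c a * Id_Og k c b) = (\<Sum>c<k. if c = a then (if a = b then 1 else 0) else 0)"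
      by (rule sum.cong) (auto simp: Id_Og_def)
    then show ?thesis using that by simp
  qed
  then show ?thesis by (auto simp: Og_def Id_Og_def)
qed

lemma act_Id:
  assumes "\<forall>a\<ge>k. fst z a = (\<lambda>_. 0)" "\<forall>a\<ge>k. snd z a = 0"
  shows "act k z (Id_Og k) = z"
proof -
  have "fst (act k z (Id_Og k)) = fst z"
  proof
    fix b show "fst (act k z (Id_Og k)) b = fst z b"
    proof (cases "b < k")
      case True
      show ?thesis
      proof
        fix i
        have "lin (fst z) (\<lambda>a. Id_Og k a b) k i = (\<Sum>a<k. if a = b then fst z a i else 0)"
          unfolding lin_def by (rule sum.cong) (auto simp: Id_Og_def)
        then show "fst (act k z (Id_Og k)) b i = fst z b i" using True by (simp add: act_def)
      qed
    qed (use assms(1) in \<open>auto simp: act_def\<close>)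
  qed
  moreover have "snd (act k z (Id_Og k)) = snd z"
  proof
    fix b show "snd (act k z (Id_Og k)) b = snd z b"
    proof (cases "b < k")
      case True
      have "(\<Sum>a<k. snd z a * Id_Og k a b) = (\<Sum>a<k. if a = b then snd z a else 0)"
        by (rule sum.cong) (auto simp: Id_Og_def)
      then show ?thesis using True by (simp add: act_def)
    qed (use assms(2) in \<open>auto simp: act_def\<close>)
  qed
  ultimately show ?thesis by (simp add: prod_eq_iff)
qed

lemma Mset_act:
  assumes z: "z \<in> Mset geo d j" and R: "R \<in> Og (d - j)"
  shows "act (d - j) z R \<in> Mset geo d j"
proof -
  obtain v \<alpha> where zz: "z = (v, \<alpha>)" by fastforce
  have v: "v \<in> Ost (d - j) (Suc d)" and a0: "\<forall>a\<ge>d - j. \<alpha> a = 0"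
    and c: "if j = 0 then sqn (d - j) \<alpha> = 1 else if geo then (\<forall>a. \<alpha> a = 0) else sqn (d - j) \<alpha> < 1"
    using z zz by (auto simp: Mset_def)
  have sq: "sqn (d - j) (snd (act (d - j) z R)) = sqn (d - j) \<alpha>"
    using act_sqn[OF R, of z] a0 zz by simp
  have zero: "(\<forall>a. snd (act (d - j) z R) a = 0)" if "\<forall>a. \<alpha> a = 0"
    using that zz by (simp add: act_def)
  have "fst (act (d - j) z R) \<in> Ost (d - j) (Suc d)" using act_Ost[OF R] v zz by simp
  moreover have "\<forall>a\<ge>d - j. snd (act (d - j) z R) a = 0" by (simp add: act_def)
  ultimately show ?thesis using c sq zero unfolding Mset_def
    by (cases "act (d - j) z R") (auto split: if_splits)
qed

lemma Mset_props:
  assumes "z \<in> Mset geo d j"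
  shows "fst z \<in> Ost (d - j) (Suc d)" "\<forall>a\<ge>d - j. snd z a = 0"
    "j = 0 \<Longrightarrow> sqn (d - j) (snd z) = 1"
    "j \<noteq> 0 \<Longrightarrow> geo \<Longrightarrow> \<forall>a. snd z a = 0"
    "j \<noteq> 0 \<Longrightarrow> \<not> geo \<Longrightarrow> sqn (d - j) (snd z) < 1"
  using assms by (auto simp: Mset_def split: if_splits)

lemma Mset_self_orbit:
  assumes "z \<in> Mset geo d j" shows "z \<in> orbit (d - j) z"
proof -
  have "act (d - j) z (Id_Og (d - j)) = z"
    using Mset_props[OF assms] by (intro act_Id) (auto simp: Ost_def)
  then show ?thesis using Id_Og unfolding orbit_def by force
qed

lemma Pset_obtain:
  assumes "p \<in> Pset geo d j"
  obtains z0 where "z0 \<in> Mset geo d j" "p = orbit (d - j) z0"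
  using assms by (auto simp: Pset_def)

lemma Pset_rep: "p \<in> Pset geo d j \<Longrightarrow> rep_of p \<in> p"
  unfolding rep_of_def by (erule Pset_obtain) (metis Mset_self_orbit someI)

lemma orbit_Mset: "z0 \<in> Mset geo d j \<Longrightarrow> z \<in> orbit (d - j) z0 \<Longrightarrow> z \<in> Mset geo d j"
  by (auto simp: orbit_def intro: Mset_act)

lemma orbit_cset:
  assumes "z \<in> orbit k z0"
  shows "(\<forall>b<k. dot n (fst z b) x = snd z b) \<longleftrightarrow> (\<forall>a<k. dot n (fst z0 a) x = snd z0 a)"
proof -
  obtain R where "R \<in> Og k" "z = act k z0 R" using assms by (auto simp: orbit_def)
  then show ?thesis using act_cset[of R k n z0 x] by simp
qed

lemma orbit_orth:
  assumes "z \<in> orbit k z0"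
  shows "(\<forall>b<k. dot n (fst z b) x = 0) \<longleftrightarrow> (\<forall>a<k. dot n (fst z0 a) x = 0)"
proof -
  obtain R where "R \<in> Og k" "z = act k z0 R" using assms by (auto simp: orbit_def)
  then show ?thesis using act_orth[of R k n z0 x] by simp
qed

lemma orbit_sqn:
  assumes "z \<in> orbit k z0" "\<forall>a\<ge>k. snd z0 a = 0"
  shows "sqn k (snd z) = sqn k (snd z0)"
proof -
  obtain R where "R \<in> Og k" "z = act k z0 R" using assms by (auto simp: orbit_def)
  then show ?thesis using act_sqn[of R k z0] assms(2) by simp
qed

section \<open>Projection onto a subsphere as argmax\<close>

lemma lin_inR: "\<forall>a<k. inR n (V a) \<Longrightarrow> inR n (lin V f k)"
  by (simp add: inR_def lin_def)

lemma Ost_inR: "V \<in> Ost k n \<Longrightarrow> \<forall>a<k. inR n (V a)"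
  by (simp add: Ost_def)

lemma dot_cong_vec: "(\<forall>i<n. x i = y i) \<Longrightarrow> dot n x z = dot n y z"
  by (simp add: dot_def)

lemma vec_eq_inR: "inR n x \<Longrightarrow> inR n y \<Longrightarrow> dot n (\<lambda>i. x i - y i) (\<lambda>i. x i - y i) = 0 \<Longrightarrow> x = y"
proof
  fix t assume a: "inR n x" "inR n y" "dot n (\<lambda>i. x i - y i) (\<lambda>i. x i - y i) = 0"
  show "x t = y t"
  proof (cases "t < n")
    case True then show ?thesis using dot_zero_imp[OF a(3) True] by simp
  qed (use a in \<open>auto simp: inR_def\<close>)
qed

lemma center_facts:
  assumes V: "V \<in> Ost k n"
  shows "inR n (lin V \<alpha> k)" "\<And>a. a < k \<Longrightarrow> dot n (V a) (lin V \<alpha> k) = \<alpha> a"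
    "dot n (lin V \<alpha> k) (lin V \<alpha> k) = sqn k \<alpha>"
  using lin_inR[OF Ost_inR[OF V]] orthon_dot_lin[OF Ost_orthon[OF V]] orthon_lin_lin[OF Ost_orthon[OF V]]
  by (auto simp: sqn_def power2_eq_square)

lemma cset_facts:
  assumes V: "V \<in> Ost k n" and y: "\<forall>a<k. dot n (V a) y = \<alpha> a"
  shows "dot n y (lin V \<alpha> k) = sqn k \<alpha>"
    "dot n (\<lambda>i. y i - lin V \<alpha> k i) (\<lambda>i. y i - lin V \<alpha> k i) = dot n y y - sqn k \<alpha>"
    "\<And>a. a < k \<Longrightarrow> dot n (V a) (\<lambda>i. y i - lin V \<alpha> k i) = 0"
proof -
  show 1: "dot n y (lin V \<alpha> k) = sqn k \<alpha>"
    using y by (simp add: dot_lin_right dot_commute[of n y] sqn_def power2_eq_square)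
  show "dot n (\<lambda>i. y i - lin V \<alpha> k i) (\<lambda>i. y i - lin V \<alpha> k i) = dot n y y - sqn k \<alpha>"
    using 1 center_facts(3)[OF V, of \<alpha>] by (simp add: dot_diff_left dot_diff_right dot_commute[of n "lin V \<alpha> k" y])
  show "\<And>a. a < k \<Longrightarrow> dot n (V a) (\<lambda>i. y i - lin V \<alpha> k i) = 0"
    using y center_facts(2)[OF V] by (simp add: dot_diff_right)
qed

lemma point_set:
  assumes V: "V \<in> Ost k (Suc d)" and s: "sqn k \<alpha> = 1"
  shows "{x \<in> Sph d. \<forall>a<k. dot (Suc d) (V a) x = \<alpha> a} = {lin V \<alpha> k}"
proof
  show "{x \<in> Sph d. \<forall>a<k. dot (Suc d) (V a) x = \<alpha> a} \<subseteq> {lin V \<alpha> k}"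
  proof
    fix y assume "y \<in> {x \<in> Sph d. \<forall>a<k. dot (Suc d) (V a) x = \<alpha> a}"
    then have y: "y \<in> Sph d" "\<forall>a<k. dot (Suc d) (V a) y = \<alpha> a" by auto
    have "dot (Suc d) (\<lambda>i. y i - lin V \<alpha> k i) (\<lambda>i. y i - lin V \<alpha> k i) = 0"
      using cset_facts(2)[OF V y(2)] y(1) s by (simp add: Sph_def)
    then have "y = lin V \<alpha> k" using vec_eq_inR center_facts(1)[OF V] y(1) by (auto simp: Sph_def)
    then show "y \<in> {lin V \<alpha> k}" by simp
  qed
  show "{lin V \<alpha> k} \<subseteq> {x \<in> Sph d. \<forall>a<k. dot (Suc d) (V a) x = \<alpha> a}"
    using center_facts[OF V, where \<alpha>=\<alpha>] s by (simp add: Sph_def)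
qed

lemma residual_lin: "residual d k V x = (\<lambda>i. x i - lin V (\<lambda>a. dot (Suc d) (V a) x) k i)"
  by (simp add: residual_def lin_def)

lemma argmax:
  assumes V: "V \<in> Ost k (Suc d)" and s1: "sqn k \<alpha> \<le> 1" and x: "inR (Suc d) x"
    and N: "vnorm (Suc d) (residual d k V x) \<noteq> 0"
  defines "p \<equiv> (\<lambda>i. lin V \<alpha> k i + sqrt (1 - sqn k \<alpha>) * residual d k V x i / vnorm (Suc d) (residual d k V x))"
  shows "p \<in> Sph d" "\<forall>a<k. dot (Suc d) (V a) p = \<alpha> a"
    "\<And>y. y \<in> Sph d \<Longrightarrow> \<forall>a<k. dot (Suc d) (V a) y = \<alpha> a \<Longrightarrow> y \<noteq> p \<Longrightarrow> dot (Suc d) x y < dot (Suc d) x p"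
proof -
  let ?n = "Suc d"
  define r where "r = residual d k V x"
  define c where "c = lin V \<alpha> k"
  define \<rho> where "\<rho> = sqrt (1 - sqn k \<alpha>)"
  define NN where "NN = vnorm ?n r"
  define t where "t = \<rho> / NN"
  have o: "orthon ?n V k" using V by (rule Ost_orthon)
  have pdef: "p = (\<lambda>i. c i + t * r i)" unfolding p_def r_def c_def \<rho>_def NN_def t_def by auto
  have NN: "NN \<noteq> 0" using N unfolding NN_def r_def .
  have rr: "dot ?n r r = NN^2" unfolding NN_def vnorm_def using dot_self_nonneg by simp
  have NNpos: "NN > 0" using NN dot_self_nonneg[of ?n r] unfolding NN_def vnorm_def by simp
  have \<rho>2: "\<rho>^2 = 1 - sqn k \<alpha>" unfolding \<rho>_def using s1 by simp
  have \<rho>0: "\<rho> \<ge> 0" unfolding \<rho>_def using s1 by simp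
  have Vr: "dot ?n (V a) r = 0" if "a < k" for a
    unfolding r_def residual_lin using that by (simp add: dot_diff_right orthon_dot_lin[OF o])
  have cr: "dot ?n c r = 0" unfolding c_def by (simp add: dot_lin_left Vr)
  have cc: "dot ?n c c = sqn k \<alpha>" unfolding c_def by (rule center_facts(3)[OF V])
  have rinR: "inR ?n r" unfolding r_def residual_lin using x lin_inR[OF Ost_inR[OF V]]
    by (simp add: inR_def lin_def)
  show pS: "p \<in> Sph d"
  proof -
    have "inR ?n p" unfolding pdef using rinR center_facts(1)[OF V] c_def by (simp add: inR_def)
    moreover have "dot ?n p p = 1"
    proof -
      have "dot ?n p p = dot ?n c c + 2 * t * dot ?n c r + t^2 * dot ?n r r"
        unfolding pdef by (simp add: dot_add_left dot_add_right dot_scale_left dot_scale_right dot_commute[of ?n r c] power2_eq_square algebra_simps)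
      also have "\<dots> = 1" using cc cr rr \<rho>2 NN by (simp add: power_divide t_def)
      finally show ?thesis .
    qed
    ultimately show ?thesis by (simp add: Sph_def)
  qed
  show pC: "\<forall>a<k. dot ?n (V a) p = \<alpha> a"
    unfolding pdef using center_facts(2)[OF V] Vr by (simp add: dot_add_right dot_scale_right c_def)
  have xr: "dot ?n x r = NN^2"
  proof -
    have "dot ?n x r = dot ?n r r + dot ?n (lin V (\<lambda>a. dot ?n (V a) x) k) r"
      unfolding r_def residual_lin by (simp add: dot_diff_left)
    also have "dot ?n (lin V (\<lambda>a. dot ?n (V a) x) k) r = 0" by (simp add: dot_lin_left Vr)
    finally show ?thesis using rr unfolding r_def by simp
  qed
  have xp: "dot ?n x p = dot ?n x c + \<rho> * NN"
  proof -
    have "dot ?n x p = dot ?n x c + t * dot ?n x r" unfolding pdef by (simp add: dot_add_right dot_scale_right)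
    then show ?thesis using xr NN by (simp add: power2_eq_square t_def)
  qed
  fix y assume yS: "y \<in> Sph d" and yC: "\<forall>a<k. dot ?n (V a) y = \<alpha> a" and yp: "y \<noteq> p"
  define u where "u = (\<lambda>i. y i - c i)"
  have uu: "dot ?n u u = \<rho>^2" using cset_facts(2)[OF V yC] yS \<rho>2 unfolding u_def c_def by (simp add: Sph_def)
  have Vu: "dot ?n (V a) u = 0" if "a < k" for a using cset_facts(3)[OF V yC that] unfolding u_def c_def .
  have xu: "dot ?n x u = dot ?n r u"
  proof -
    have "dot ?n r u = dot ?n x u - dot ?n (lin V (\<lambda>a. dot ?n (V a) x) k) u"
      unfolding r_def residual_lin by (simp add: dot_diff_left)
    also have "dot ?n (lin V (\<lambda>a. dot ?n (V a) x) k) u = 0" by (simp add: dot_lin_left Vu)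
    finally show ?thesis by simp
  qed
  have xy: "dot ?n x y = dot ?n x c + dot ?n r u"
  proof -
    have "y = (\<lambda>i. c i + u i)" unfolding u_def by simp
    then have "dot ?n x y = dot ?n x c + dot ?n x u" by (simp add: dot_add_right)
    then show ?thesis using xu by simp
  qed
  define e where "e = (\<lambda>i. u i - t * r i)"
  have ee: "dot ?n e e = 2 * \<rho>^2 - 2 * t * dot ?n r u"
  proof -
    have "dot ?n e e = dot ?n u u - 2 * t * dot ?n r u + t^2 * dot ?n r r"
      unfolding e_def by (simp add: dot_diff_left dot_diff_right dot_scale_left dot_scale_right dot_commute[of ?n u r] power2_eq_square algebra_simps)
    then show ?thesis using uu rr NN by (simp add: power_divide t_def)
  qed
  have le: "dot ?n r u \<le> \<rho> * NN"
  proof -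
    have "0 \<le> 2 * \<rho>^2 - 2 * t * dot ?n r u" using ee dot_self_nonneg[of ?n e] by simp
    then have "t * dot ?n r u \<le> \<rho>^2" by simp
    then have "(\<rho> * dot ?n r u) / NN \<le> \<rho>^2" by (simp add: t_def)
    then have "\<rho> * dot ?n r u \<le> \<rho>^2 * NN" using NNpos by (simp add: divide_le_eq)
    then show ?thesis
    proof (cases "\<rho> = 0")
      case True
      then have "dot ?n u u = 0" using uu by simp
      then have "\<forall>i<?n. u i = 0" using dot_zero_imp by blast
      then have "dot ?n r u = 0" by (simp add: dot_def)
      then show ?thesis using True by simp
    next
      case False
      then have "\<rho> > 0" using \<rho>0 by simp
      then show ?thesis using \<open>\<rho> * dot ?n r u \<le> \<rho>^2 * NN\<close> by (simp add: power2_eq_square mult.assoc)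
    qed
  qed
  have ne: "dot ?n r u \<noteq> \<rho> * NN"
  proof
    assume eq: "dot ?n r u = \<rho> * NN"
    then have "dot ?n e e = 0" using ee NN by (simp add: power2_eq_square t_def)
    have "y = p"
    proof (rule vec_eq_inR[of ?n])
      show "inR ?n y" using yS by (simp add: Sph_def)
      show "inR ?n p" using pS by (simp add: Sph_def)
      have "(\<lambda>i. y i - p i) = e" unfolding e_def u_def pdef by (auto simp: algebra_simps)
      then show "dot ?n (\<lambda>i. y i - p i) (\<lambda>i. y i - p i) = 0" using \<open>dot ?n e e = 0\<close> by simp
    qed
    then show False using yp by simp
  qed
  show "dot ?n x y < dot ?n x p" using xy xp le ne by simp
qed

section \<open>Orthonormal completion\<close>

lemma sum_split_add: "(\<Sum>a<k + (l::nat). f a) = (\<Sum>a<k. f a) + (\<Sum>a<l. f (k + a))"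
  by (induction l) (simp_all add: add.assoc)

lemma Ost_extend:
  assumes V: "V \<in> Ost k n" and w: "inR n w" "dot n w w = 1" "\<forall>a<k. dot n (V a) w = 0"
  shows "V(k := w) \<in> Ost (Suc k) n"
proof -
  have o: "\<forall>a<k. \<forall>b<k. dot n (V a) (V b) = (if a = b then 1 else 0)" "\<forall>a<k. inR n (V a)" "\<forall>a\<ge>k. V a = (\<lambda>_. 0)"
    using V by (auto simp: Ost_def)
  have wV: "\<forall>a<k. dot n w (V a) = 0" using w(3) dot_commute by metis
  have "\<forall>a<Suc k. \<forall>b<Suc k. dot n ((V(k := w)) a) ((V(k := w)) b) = (if a = b then 1 else 0)"
  proof (intro allI impI)
    fix a b assume "a < Suc k" "b < Suc k"
    then show "dot n ((V(k := w)) a) ((V(k := w)) b) = (if a = b then 1 else 0)"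
      using o(1) wV w(2,3) by (cases "a = k"; cases "b = k") (auto simp: less_Suc_eq)
  qed
  moreover have "\<forall>a<Suc k. inR n ((V(k := w)) a)" using o(2) w(1) by (auto simp: less_Suc_eq)
  moreover have "\<forall>a\<ge>Suc k. (V(k := w)) a = (\<lambda>_. 0)" using o(3) by auto
  ultimately show ?thesis by (simp add: Ost_def)
qed

lemma completion_ex:
  fixes e :: nat
  assumes v: "v \<in> Ost k n"
  shows "k + e \<le> n \<Longrightarrow> \<exists>vt. vt \<in> Ost e n \<and> (\<lambda>a. if a < k then v a else vt (a - k)) \<in> Ost (k + e) n"
proof (induction e)
  case 0
  have "(\<lambda>a. if a < k then v a else (\<lambda>_ _. 0::real) (a - k)) = v"
    using v by (auto simp: Ost_def)
  moreover have "(\<lambda>_ _. 0::real) \<in> Ost 0 n" by (simp add: Ost_def)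
  ultimately show ?case using v by auto
next
  case (Suc e)
  then obtain vt where vt: "vt \<in> Ost e n" and cb: "(\<lambda>a. if a < k then v a else vt (a - k)) \<in> Ost (k + e) n"
    by auto
  define cbf where "cbf = (\<lambda>a. if a < k then v a else vt (a - k))"
  have cb': "cbf \<in> Ost (k + e) n" using cb unfolding cbf_def .
  obtain w where w: "inR n w" "dot n w w = 1" "\<forall>a<k + e. dot n (cbf a) w = 0"
    using extend_exists[OF Ost_orthon[OF cb'] Ost_inR[OF cb']] Suc.prems by auto
  have wvt: "\<forall>a<e. dot n (vt a) w = 0"
  proof (intro allI impI)
    fix a assume "a < e"
    then have "dot n (cbf (k + a)) w = 0" using w(3) by auto
    then show "dot n (vt a) w = 0" by (simp add: cbf_def)
  qed
  have "vt(e := w) \<in> Ost (Suc e) n" by (rule Ost_extend[OF vt w(1,2) wvt])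
  moreover have "(\<lambda>a. if a < k then v a else (vt(e := w)) (a - k)) = cbf(k + e := w)"
    unfolding cbf_def by (auto simp: fun_eq_iff)
  moreover have "cbf(k + e := w) \<in> Ost (Suc (k + e)) n" by (rule Ost_extend[OF cb' w])
  ultimately show ?case by auto
qed

lemma complement_props:
  assumes v: "v \<in> Ost (m - j) (Suc m)" and jm: "j \<le> m"
  shows "complement m j v \<in> Ost (Suc j) (Suc m) \<and>
    (\<lambda>a. if a < m - j then v a else complement m j v (a - (m - j))) \<in> Ost (Suc m) (Suc m)"
proof -
  have "m - j + Suc j = Suc m" using jm by simp
  then have "\<exists>vt. vt \<in> Ost (Suc j) (Suc m) \<and> (\<lambda>a. if a < m - j then v a else vt (a - (m - j))) \<in> Ost (Suc m) (Suc m)"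
    using completion_ex[OF v, of "Suc j"] by auto
  then show ?thesis unfolding complement_def by (rule someI_ex)
qed

locale frame =
  fixes m j :: nat and v vt :: "nat \<Rightarrow> vec" and \<alpha> :: "nat \<Rightarrow> real"
  assumes jm: "j \<le> m" and v: "v \<in> Ost (m - j) (Suc m)" and vt: "vt \<in> Ost (Suc j) (Suc m)"
    and comb: "(\<lambda>a. if a < m - j then v a else vt (a - (m - j))) \<in> Ost (Suc m) (Suc m)"
    and s: "sqn (m - j) \<alpha> < 1"
begin

definition "\<rho> = sqrt (1 - sqn (m - j) \<alpha>)"
definition "cen = lin v \<alpha> (m - j)"
definition "Y = {x \<in> Sph m. \<forall>a<m - j. dot (Suc m) (v a) x = \<alpha> a}"
definition "gm x = (\<lambda>c. tmul m j vt x c / \<rho>)"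
definition "gi z = (\<lambda>i. cen i + \<rho> * lin vt z (Suc j) i)"

lemma \<rho>_pos: "\<rho> > 0" using s by (simp add: \<rho>_def)
lemma \<rho>_sq: "\<rho>^2 = 1 - sqn (m - j) \<alpha>" using s by (simp add: \<rho>_def)

lemma ov: "orthon (Suc m) v (m - j)" using v by (rule Ost_orthon)
lemma ovt: "orthon (Suc m) vt (Suc j)" using vt by (rule Ost_orthon)

lemma v_vt: "a < m - j \<Longrightarrow> c < Suc j \<Longrightarrow> dot (Suc m) (v a) (vt c) = 0"
proof -
  assume a: "a < m - j" and c: "c < Suc j"
  have "orthon (Suc m) (\<lambda>a. if a < m - j then v a else vt (a - (m - j))) (Suc m)"
    using comb by (rule Ost_orthon)
  then have h: "\<forall>a<Suc m. \<forall>b<Suc m. dot (Suc m) (if a < m - j then v a else vt (a - (m - j)))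
     (if b < m - j then v b else vt (b - (m - j))) = (if a = b then 1 else 0)"
    unfolding orthon_def by simp
  obtain b where b: "b = m - j + c" by simp
  have b1: "b < Suc m" "\<not> b < m - j" "b - (m - j) = c" "a \<noteq> b" "a < Suc m" using a b c jm by auto
  show ?thesis using h[rule_format, OF b1(5) b1(1)] b1 a by simp
qed

lemma vt_v: "a < m - j \<Longrightarrow> c < Suc j \<Longrightarrow> dot (Suc m) (vt c) (v a) = 0"
  using v_vt dot_commute by metis

lemma sum_if_lt: "(\<Sum>a<k. if a < k then f a else g a) = (\<Sum>a<k. f a)"
  by (rule sum.cong) auto

lemma split_sum: "(\<Sum>a<Suc m. f a) = (\<Sum>a<m - j. f a) + (\<Sum>c<Suc j. f (m - j + c))"
proof -
  have "Suc m = m - j + Suc j" using jm by simp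
  then show ?thesis using sum_split_add[of f "m - j" "Suc j"] by simp
qed

lemma parseval_split:
  assumes x: "inR (Suc m) x"
  shows "dot (Suc m) x y = (\<Sum>a<m - j. dot (Suc m) (v a) x * dot (Suc m) (v a) y)
     + (\<Sum>c<Suc j. dot (Suc m) (vt c) x * dot (Suc m) (vt c) y)"
  using square_parseval[OF Ost_orthon[OF comb] Ost_inR[OF comb] x, of y]
  unfolding split_sum by (simp add: sum_if_lt[where f="\<lambda>a. dot (Suc m) (v a) x * dot (Suc m) (v a) y"] if_distrib del: sum.lessThan_Suc cong: if_cong)

lemma complete_split:
  assumes x: "inR (Suc m) x"
  shows "x t = (\<Sum>a<m - j. dot (Suc m) (v a) x * v a t) + (\<Sum>c<Suc j. dot (Suc m) (vt c) x * vt c t)"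
  using square_complete[OF Ost_orthon[OF comb] Ost_inR[OF comb] x, of t]
  unfolding split_sum by (simp add: sum_if_lt[where f="\<lambda>a. dot (Suc m) (v a) x * v a t"] if_distrib del: sum.lessThan_Suc cong: if_cong)

lemma tmul_dot:
  assumes y: "inR (Suc m) y"
  shows "dot (Suc j) (tmul m j vt y) (tmul m j vt x) = dot (Suc m) y x - (\<Sum>a<m - j. dot (Suc m) (v a) y * dot (Suc m) (v a) x)"
proof -
  have "dot (Suc j) (tmul m j vt y) (tmul m j vt x) = (\<Sum>c<Suc j. dot (Suc m) (vt c) y * dot (Suc m) (vt c) x)"
    by (simp add: dot_def tmul_def)
  then show ?thesis using parseval_split[OF y, of x] by simp
qed

lemma Y_sum: "x \<in> Y \<Longrightarrow> (\<Sum>a<m - j. dot (Suc m) (v a) x * dot (Suc m) (v a) x) = sqn (m - j) \<alpha>"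
  by (simp add: Y_def sqn_def power2_eq_square)

lemma gm_dot: "y \<in> Y \<Longrightarrow> x \<in> Y \<Longrightarrow> dot (Suc j) (gm y) (gm x) = (dot (Suc m) y x - sqn (m - j) \<alpha>) / \<rho>^2"
proof -
  assume y: "y \<in> Y" and x: "x \<in> Y"
  have "dot (Suc j) (gm y) (gm x) = dot (Suc j) (tmul m j vt y) (tmul m j vt x) / \<rho>^2"
    unfolding gm_def by (simp add: dot_div_left dot_div_right power2_eq_square)
  also have "\<dots> = (dot (Suc m) y x - sqn (m - j) \<alpha>) / \<rho>^2"
    using tmul_dot[of y x] y x by (simp add: Y_def Sph_def sqn_def power2_eq_square)
  finally show ?thesis .
qed

lemma tmul_norm: "x \<in> Y \<Longrightarrow> vnorm (Suc j) (tmul m j vt x) = \<rho>"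
proof -
  assume x: "x \<in> Y"
  have "dot (Suc j) (tmul m j vt x) (tmul m j vt x) = 1 - sqn (m - j) \<alpha>"
    using tmul_dot[of x x] x Y_sum[OF x] by (simp add: Y_def Sph_def)
  then show ?thesis by (simp add: vnorm_def \<rho>_def)
qed

lemma gm_inR: "inR (Suc j) (gm x)" by (simp add: gm_def tmul_def inR_def)

lemma gm_Sph: "x \<in> Y \<Longrightarrow> gm x \<in> Sph j"
proof -
  assume x: "x \<in> Y"
  have "dot (Suc j) (gm x) (gm x) = (1 - sqn (m - j) \<alpha>) / \<rho>^2" using gm_dot[OF x x] x by (simp add: Y_def Sph_def)
  then have "dot (Suc j) (gm x) (gm x) = 1" using \<rho>_sq s by simp
  then show ?thesis using gm_inR by (simp add: Sph_def)
qed

lemma cen_vt: "c < Suc j \<Longrightarrow> dot (Suc m) (vt c) cen = 0"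
  by (simp add: cen_def dot_lin_right vt_v)

lemma gi_vt: "c < Suc j \<Longrightarrow> dot (Suc m) (vt c) (gi z) = \<rho> * z c"
  by (simp add: gi_def dot_add_right dot_scale_right cen_vt orthon_dot_lin[OF ovt])

lemma gi_v: "a < m - j \<Longrightarrow> dot (Suc m) (v a) (gi z) = \<alpha> a"
proof -
  assume a: "a < m - j"
  have "dot (Suc m) (v a) cen = \<alpha> a" unfolding cen_def using center_facts(2)[OF v a] .
  moreover have "dot (Suc m) (v a) (lin vt z (Suc j)) = 0" using a by (simp add: dot_lin_right v_vt)
  ultimately show ?thesis by (simp add: gi_def dot_add_right dot_scale_right)
qed

lemma gi_w: "\<forall>a<m - j. dot (Suc m) (v a) w = 0 \<Longrightarrow>
   dot (Suc m) w (gi z) = \<rho> * (\<Sum>c<Suc j. z c * dot (Suc m) w (vt c))"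
  by (simp add: gi_def dot_add_right dot_scale_right cen_def dot_lin_right dot_commute[of _ w])

lemma gi_inR: "inR (Suc m) (gi z)"
  using lin_inR[OF Ost_inR[OF v]] lin_inR[OF Ost_inR[OF vt]] unfolding gi_def cen_def inR_def by simp

lemma gi_dot: "dot (Suc m) (gi z) (gi z) = sqn (m - j) \<alpha> + \<rho>^2 * dot (Suc j) z z"
proof -
  have cc: "dot (Suc m) cen cen = sqn (m - j) \<alpha>" unfolding cen_def by (rule center_facts(3)[OF v])
  have cl: "dot (Suc m) cen (lin vt z (Suc j)) = 0" by (simp add: dot_lin_right dot_commute[of _ cen] cen_vt)
  have zz: "dot (Suc j) z z = (\<Sum>c<Suc j. z c * z c)" by (simp only: dot_def)
  have ll: "dot (Suc m) (lin vt z (Suc j)) (lin vt z (Suc j)) = dot (Suc j) z z"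
    unfolding zz by (rule orthon_lin_lin[OF ovt])
  show ?thesis unfolding gi_def
    by (simp add: dot_add_left dot_add_right dot_scale_left dot_scale_right cc cl ll dot_commute[of _ "lin vt z (Suc j)" cen] power2_eq_square)
qed

lemma gi_gm: "x \<in> Y \<Longrightarrow> gi (gm x) = x"
proof
  fix t assume x: "x \<in> Y"
  have xi: "inR (Suc m) x" using x by (simp add: Y_def Sph_def)
  have "\<rho> * lin vt (gm x) (Suc j) t = (\<Sum>c<Suc j. \<rho> * (gm x c * vt c t))"
    by (simp add: lin_def sum_distrib_left del: sum.lessThan_Suc)
  also have "\<dots> = (\<Sum>c<Suc j. dot (Suc m) (vt c) x * vt c t)"
    by (rule sum.cong) (use \<rho>_pos in \<open>auto simp: gm_def tmul_def\<close>)
  finally have "gi (gm x) t = cen t + (\<Sum>c<Suc j. dot (Suc m) (vt c) x * vt c t)"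
    by (simp add: gi_def)
  also have "cen t = (\<Sum>a<m - j. dot (Suc m) (v a) x * v a t)"
    using x by (simp add: cen_def lin_def Y_def)
  finally show "gi (gm x) t = x t" using complete_split[OF xi, of t] by simp
qed

lemma gm_gi: "inR (Suc j) z \<Longrightarrow> gm (gi z) = z"
proof
  fix c assume z: "inR (Suc j) z"
  show "gm (gi z) c = z c"
    using gi_vt[of c z] \<rho>_pos z by (cases "c < Suc j") (auto simp: gm_def tmul_def inR_def)
qed

lemma proj_facts:
  assumes q: "inR (Suc m) q" and N: "vnorm (Suc m) (residual m (m - j) v q) \<noteq> 0"
  shows "proj m j (v, \<alpha>) q \<in> Y"
    "\<And>x. x \<in> Y \<Longrightarrow> dot (Suc m) (proj m j (v, \<alpha>) q) x = sqn (m - j) \<alpha> +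
        \<rho> / vnorm (Suc m) (residual m (m - j) v q) * (dot (Suc m) q x - (\<Sum>a<m - j. dot (Suc m) (v a) q * \<alpha> a))"
proof -
  have sl: "sqn (m - j) \<alpha> \<le> 1" using s by simp
  note am = argmax[OF v sl q N]
  have pe: "proj m j (v, \<alpha>) q = (\<lambda>i. lin v \<alpha> (m - j) i + sqrt (1 - sqn (m - j) \<alpha>) * residual m (m - j) v q i / vnorm (Suc m) (residual m (m - j) v q))"
    by (simp add: proj_def)
  show "proj m j (v, \<alpha>) q \<in> Y" unfolding Y_def pe using am(1,2) by simp
  fix x assume x: "x \<in> Y"
  define r where "r = residual m (m - j) v q"
  define t where "t = \<rho> / vnorm (Suc m) r"
  have pe2: "proj m j (v, \<alpha>) q = (\<lambda>i. cen i + t * r i)"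
    unfolding pe t_def r_def cen_def \<rho>_def by auto
  have xc: "\<forall>a<m - j. dot (Suc m) (v a) x = \<alpha> a" using x by (simp add: Y_def)
  have "dot (Suc m) cen x = sqn (m - j) \<alpha>"
    using cset_facts(1)[OF v xc] dot_commute unfolding cen_def by metis
  moreover have "dot (Suc m) r x = dot (Suc m) q x - (\<Sum>a<m - j. dot (Suc m) (v a) q * \<alpha> a)"
    unfolding r_def residual_lin using xc by (simp add: dot_diff_left dot_lin_left)
  moreover have "dot (Suc m) (\<lambda>i. cen i + t * r i) x = dot (Suc m) cen x + t * dot (Suc m) r x"
    by (simp add: dot_add_left dot_scale_left)
  ultimately show "dot (Suc m) (proj m j (v, \<alpha>) q) x = sqn (m - j) \<alpha> +
        \<rho> / vnorm (Suc m) (residual m (m - j) v q) * (dot (Suc m) q x - (\<Sum>a<m - j. dot (Suc m) (v a) q * \<alpha> a))"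
    unfolding pe2 by (simp only: t_def r_def)
qed

lemma gi_Y: "z \<in> Sph j \<Longrightarrow> gi z \<in> Y"
  using gi_dot[of z] gi_inR gi_v \<rho>_sq by (simp add: Y_def Sph_def)

end

section \<open>Chain of nested subspheres\<close>

lemma child_cset:
  "(\<forall>a<Suc k. dot n (((fst z)(k := w)) a) x = ((snd z)(k := b)) a) \<longleftrightarrow>
   (\<forall>a<k. dot n (fst z a) x = snd z a) \<and> dot n w x = b"
  by (auto simp: less_Suc_eq)

lemma child_orth:
  "(\<forall>a<Suc k. dot n (((fst z)(k := w)) a) x = 0) \<longleftrightarrow>
   (\<forall>a<k. dot n (fst z a) x = 0) \<and> dot n w x = 0"
  by (auto simp: less_Suc_eq)

lemma sqn_upd: "sqn (Suc k) (f(k := b)) = sqn k f + b^2"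
proof -
  have "(\<Sum>i<k. ((f(k := b)) i)^2) = (\<Sum>i<k. (f i)^2)" by (rule sum.cong) auto
  then show ?thesis by (simp add: sqn_def)
qed

lemma chain:
  assumes P: "\<forall>l<m. p l \<in> Pset geo m l"
    and C: "\<forall>l. 1 \<le> l \<and> l \<le> m - 1 \<longrightarrow> p (l - 1) \<in> children geo m l (p l)"
    and jm: "j \<le> m - 1" and zj: "rep_of (p j) = (v, \<alpha>)"
  shows "t \<le> j \<Longrightarrow> \<exists>W \<beta>. W \<in> Ost t (Suc m) \<and> (\<forall>i<t. \<forall>a<m - j. dot (Suc m) (v a) (W i) = 0) \<and> (\<forall>i\<ge>t. \<beta> i = 0)
   \<and> (\<forall>x. (\<forall>a<m - (j - t). dot (Suc m) (fst (rep_of (p (j - t))) a) x = snd (rep_of (p (j - t))) a) \<longleftrightarrow>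
          ((\<forall>a<m - j. dot (Suc m) (v a) x = \<alpha> a) \<and> (\<forall>i<t. dot (Suc m) (W i) x = \<beta> i)))
   \<and> (\<forall>u. (\<forall>a<m - (j - t). dot (Suc m) (fst (rep_of (p (j - t))) a) u = 0) \<longleftrightarrow>
          ((\<forall>a<m - j. dot (Suc m) (v a) u = 0) \<and> (\<forall>i<t. dot (Suc m) (W i) u = 0)))
   \<and> sqn (m - (j - t)) (snd (rep_of (p (j - t)))) = sqn (m - j) \<alpha> + sqn t \<beta>"
proof (induction t)
  case 0
  have "(\<lambda>_ _. 0::real) \<in> Ost 0 (Suc m)" by (simp add: Ost_def)
  then show ?case using zj by (intro exI[of _ "\<lambda>_ _. 0"] exI[of _ "\<lambda>_. 0"]) (simp add: sqn_def)
next
  case (Suc t)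
  define l where "l = j - t"
  have l1: "1 \<le> l" "l \<le> m - 1" "l < m" using Suc.prems jm unfolding l_def by auto
  have jt: "j - Suc t = l - 1" "m - (j - Suc t) = Suc (m - l)" "j - t = l" using Suc.prems l1 unfolding l_def by auto
  obtain W \<beta> where H: "W \<in> Ost t (Suc m) \<and> (\<forall>i<t. \<forall>a<m - j. dot (Suc m) (v a) (W i) = 0) \<and> (\<forall>i\<ge>t. \<beta> i = 0)
   \<and> (\<forall>x. (\<forall>a<m - l. dot (Suc m) (fst (rep_of (p l)) a) x = snd (rep_of (p l)) a) \<longleftrightarrow>
          ((\<forall>a<m - j. dot (Suc m) (v a) x = \<alpha> a) \<and> (\<forall>i<t. dot (Suc m) (W i) x = \<beta> i)))
   \<and> (\<forall>u. (\<forall>a<m - l. dot (Suc m) (fst (rep_of (p l)) a) u = 0) \<longleftrightarrow>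
          ((\<forall>a<m - j. dot (Suc m) (v a) u = 0) \<and> (\<forall>i<t. dot (Suc m) (W i) u = 0)))
   \<and> sqn (m - l) (snd (rep_of (p l))) = sqn (m - j) \<alpha> + sqn t \<beta>"
    using Suc.IH[OF Suc_leD[OF Suc.prems]] unfolding jt(3) by (elim exE) (erule that)
  have W: "W \<in> Ost t (Suc m)"
    using H by (elim conjE) assumption
  have Wv: "\<forall>i<t. \<forall>a<m - j. dot (Suc m) (v a) (W i) = 0"
    using H by (elim conjE) assumption
  have \<beta>0: "\<forall>i\<ge>t. \<beta> i = 0"
    using H by (elim conjE) assumption
  have cs: "\<forall>x. (\<forall>a<m - l. dot (Suc m) (fst (rep_of (p l)) a) x = snd (rep_of (p l)) a) \<longleftrightarrow>
          ((\<forall>a<m - j. dot (Suc m) (v a) x = \<alpha> a) \<and> (\<forall>i<t. dot (Suc m) (W i) x = \<beta> i))"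
    using H by (elim conjE) assumption
  have ot: "\<forall>u. (\<forall>a<m - l. dot (Suc m) (fst (rep_of (p l)) a) u = 0) \<longleftrightarrow>
          ((\<forall>a<m - j. dot (Suc m) (v a) u = 0) \<and> (\<forall>i<t. dot (Suc m) (W i) u = 0))"
    using H by (elim conjE) assumption
  have sq: "sqn (m - l) (snd (rep_of (p l))) = sqn (m - j) \<alpha> + sqn t \<beta>"
    using H by (elim conjE) assumption
  have "p (l - 1) \<in> children geo m l (p l)" using C l1 by auto
  then obtain z w b where pl1: "p (l - 1) = orbit (Suc (m - l)) ((fst z)(m - l := w), (snd z)(m - l := b))"
    and z: "z \<in> p l" and w: "w \<in> Sph m" and wz: "\<forall>a<m - l. dot (Suc m) (fst z a) w = 0"
    unfolding children_def by auto
  have Pl: "p l \<in> Pset geo m l" using P l1 by auto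
  obtain z0 where z0: "z0 \<in> Mset geo m l" and plo: "p l = orbit (m - l) z0" using Pset_obtain[OF Pl] by metis
  have zl: "rep_of (p l) \<in> orbit (m - l) z0" using Pset_rep[OF Pl] plo by simp
  have zo: "z \<in> orbit (m - l) z0" using z plo by simp
  have zM: "z \<in> Mset geo m l" using orbit_Mset[OF z0 zo] .
  have z0a: "\<forall>a\<ge>m - l. snd z0 a = 0" using Mset_props(2)[OF z0] .
  have cz: "(\<forall>a<m - l. dot (Suc m) (fst z a) x = snd z a) \<longleftrightarrow>
      (\<forall>a<m - l. dot (Suc m) (fst (rep_of (p l)) a) x = snd (rep_of (p l)) a)" for x
    using orbit_cset[OF zo] orbit_cset[OF zl] by blast
  have oz: "(\<forall>a<m - l. dot (Suc m) (fst z a) x = 0) \<longleftrightarrow>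
      (\<forall>a<m - l. dot (Suc m) (fst (rep_of (p l)) a) x = 0)" for x
    using orbit_orth[OF zo] orbit_orth[OF zl] by blast
  have sz: "sqn (m - l) (snd z) = sqn (m - l) (snd (rep_of (p l)))"
    using orbit_sqn[OF zo z0a] orbit_sqn[OF zl z0a] by simp
  define z' where "z' = ((fst z)(m - l := w), (snd z)(m - l := b))"
  have r1: "rep_of (p (l - 1)) \<in> orbit (Suc (m - l)) z'"
  proof -
    have "p (l - 1) \<in> Pset geo m (l - 1)" using P l1 by auto
    then show ?thesis using Pset_rep pl1 z'_def by metis
  qed
  have wu: "inR (Suc m) w" "dot (Suc m) w w = 1" using w by (auto simp: Sph_def)
  have wperp: "(\<forall>a<m - j. dot (Suc m) (v a) w = 0) \<and> (\<forall>i<t. dot (Suc m) (W i) w = 0)"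
    using ot oz[of w] wz by blast
  define W' where "W' = W(t := w)"
  define \<beta>' where "\<beta>' = \<beta>(t := b)"
  have f1: "W' \<in> Ost (Suc t) (Suc m)" unfolding W'_def by (rule Ost_extend[OF W wu]) (use wperp in auto)
  have f2: "\<forall>i<Suc t. \<forall>a<m - j. dot (Suc m) (v a) (W' i) = 0"
    using Wv wperp unfolding W'_def by (auto simp: less_Suc_eq)
  have f3: "\<forall>i\<ge>Suc t. \<beta>' i = 0" using \<beta>0 unfolding \<beta>'_def by auto
  have f4: "\<forall>x. (\<forall>a<Suc (m - l). dot (Suc m) (fst (rep_of (p (l - 1))) a) x = snd (rep_of (p (l - 1))) a) \<longleftrightarrow>
          ((\<forall>a<m - j. dot (Suc m) (v a) x = \<alpha> a) \<and> (\<forall>i<Suc t. dot (Suc m) (W' i) x = \<beta>' i))"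
  proof
    fix x
    have "(\<forall>a<Suc (m - l). dot (Suc m) (fst (rep_of (p (l - 1))) a) x = snd (rep_of (p (l - 1))) a) \<longleftrightarrow>
        (\<forall>a<Suc (m - l). dot (Suc m) (fst z' a) x = snd z' a)" using orbit_cset[OF r1] .
    also have "\<dots> \<longleftrightarrow> (\<forall>a<m - l. dot (Suc m) (fst z a) x = snd z a) \<and> dot (Suc m) w x = b"
      unfolding z'_def using child_cset[of "m - l" "Suc m" z w x b] by simp
    also have "\<dots> \<longleftrightarrow> ((\<forall>a<m - j. dot (Suc m) (v a) x = \<alpha> a) \<and> (\<forall>i<Suc t. dot (Suc m) (W' i) x = \<beta>' i))"
      using cz[of x] cs unfolding W'_def \<beta>'_def by (auto simp: less_Suc_eq)
    finally show "(\<forall>a<Suc (m - l). dot (Suc m) (fst (rep_of (p (l - 1))) a) x = snd (rep_of (p (l - 1))) a) \<longleftrightarrow>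
          ((\<forall>a<m - j. dot (Suc m) (v a) x = \<alpha> a) \<and> (\<forall>i<Suc t. dot (Suc m) (W' i) x = \<beta>' i))" .
  qed
  have f5: "\<forall>u. (\<forall>a<Suc (m - l). dot (Suc m) (fst (rep_of (p (l - 1))) a) u = 0) \<longleftrightarrow>
          ((\<forall>a<m - j. dot (Suc m) (v a) u = 0) \<and> (\<forall>i<Suc t. dot (Suc m) (W' i) u = 0))"
  proof
    fix x
    have "(\<forall>a<Suc (m - l). dot (Suc m) (fst (rep_of (p (l - 1))) a) x = 0) \<longleftrightarrow>
        (\<forall>a<Suc (m - l). dot (Suc m) (fst z' a) x = 0)" using orbit_orth[OF r1] .
    also have "\<dots> \<longleftrightarrow> (\<forall>a<m - l. dot (Suc m) (fst z a) x = 0) \<and> dot (Suc m) w x = 0"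
      unfolding z'_def using child_orth[of "m - l" "Suc m" z w x] by simp
    also have "\<dots> \<longleftrightarrow> ((\<forall>a<m - j. dot (Suc m) (v a) x = 0) \<and> (\<forall>i<Suc t. dot (Suc m) (W' i) x = 0))"
      using oz[of x] ot unfolding W'_def by (auto simp: less_Suc_eq)
    finally show "(\<forall>a<Suc (m - l). dot (Suc m) (fst (rep_of (p (l - 1))) a) x = 0) \<longleftrightarrow>
          ((\<forall>a<m - j. dot (Suc m) (v a) x = 0) \<and> (\<forall>i<Suc t. dot (Suc m) (W' i) x = 0))" .
  qed
  have f6: "sqn (Suc (m - l)) (snd (rep_of (p (l - 1)))) = sqn (m - j) \<alpha> + sqn (Suc t) \<beta>'"
  proof -
    have za: "\<forall>a\<ge>Suc (m - l). snd z' a = 0" using Mset_props(2)[OF zM] unfolding z'_def by auto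
    have "sqn (Suc (m - l)) (snd (rep_of (p (l - 1)))) = sqn (Suc (m - l)) (snd z')"
      using orbit_sqn[OF r1 za] .
    also have "\<dots> = sqn (m - l) (snd z) + b^2" unfolding z'_def by (simp add: sqn_upd)
    also have "\<dots> = sqn (m - j) \<alpha> + sqn t \<beta> + b^2" using sz sq by simp
    also have "\<dots> = sqn (m - j) \<alpha> + sqn (Suc t) \<beta>'" unfolding \<beta>'_def by (simp add: sqn_upd)
    finally show ?thesis .
  qed
  have jt2: "m - (l - 1) = Suc (m - l)" using l1 by auto
  show ?case unfolding jt(1) jt2
    by (rule exI[of _ W'], rule exI[of _ \<beta>'], intro conjI; fact)
qed


lemma rep_Mset: "P \<in> Pset geo d jj \<Longrightarrow> rep_of P \<in> Mset geo d jj"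
  by (metis Pset_obtain Pset_rep orbit_Mset)

lemma subsphP_eq:
  assumes "P \<in> Pset geo d jj"
  shows "subsphP d jj P = {x \<in> Sph d. \<forall>a<d - jj. dot (Suc d) (fst (rep_of P) a) x = snd (rep_of P) a}"
proof (cases "jj = 0")
  case True
  have M: "rep_of P \<in> Mset geo d jj" using rep_Mset[OF assms] .
  show ?thesis using point_set[OF Mset_props(1)[OF M] Mset_props(3)[OF M True]] True
    by (simp add: subsphP_def subsph_def)
qed (simp add: subsphP_def subsph_def)

lemma sqn_nonneg: "sqn k a \<ge> 0" by (simp add: sqn_def sum_nonneg)

lemma sqn_div: "sqn k (\<lambda>i. a i / c) = sqn k a / c^2"
  by (simp add: sqn_def power_divide sum_divide_distrib)

theorem proposition2p5:
  fixes geo :: bool and m j j' :: nat and p :: "nat \<Rightarrow> rep set" and q :: vec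
  assumes "m \<ge> 2"
    and "\<forall>l<m. p l \<in> Pset geo m l"
    and "p (m - 1) \<in> children_top geo m"
    and "\<forall>l. 1 \<le> l \<and> l \<le> m - 1 \<longrightarrow> p (l - 1) \<in> children geo m l (p l)"
    and "j' < j" and "j \<le> m - 1"
    and "q \<in> Sph m"
    and "projP_ok m j (p j) q"
    and "pi_btw_ok geo m j j' (p j) (p j') (projP m j (p j) q)"
    and "projP_ok m j' (p j') q"
  shows "pi_btw geo m j j' (p j) (p j') (projP m j (p j) q) = projP m j' (p j') q"
proof -
  note P = assms(2) and C = assms(4) and jj' = assms(5) and jm = assms(6) and qS = assms(7)
  have j1: "j \<noteq> 0" "j < m" "j \<le> m" using jj' jm assms(1) by auto
  have Pj: "p j \<in> Pset geo m j" using P j1 by auto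
  have Pj': "p j' \<in> Pset geo m j'" using P j1 jj' by auto
  obtain v \<alpha> where zj: "rep_of (p j) = (v, \<alpha>)" by fastforce
  have zjM: "(v, \<alpha>) \<in> Mset geo m j" using rep_Mset[OF Pj] zj by simp
  have v: "v \<in> Ost (m - j) (Suc m)" using Mset_props(1)[OF zjM] by simp
  have s: "sqn (m - j) \<alpha> < 1"
  proof (cases geo)
    case True
    then have "\<forall>a. \<alpha> a = 0" using Mset_props(4)[OF zjM j1(1)] by simp
    then show ?thesis by (simp add: sqn_def)
  qed (use Mset_props(5)[OF zjM j1(1)] in simp)
  define vt where "vt = complement m j v"
  have vt: "vt \<in> Ost (Suc j) (Suc m)"
    and comb: "(\<lambda>a. if a < m - j then v a else vt (a - (m - j))) \<in> Ost (Suc m) (Suc m)"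
    using complement_props[OF v j1(3)] unfolding vt_def by auto
  interpret F: frame m j v vt \<alpha> using j1(3) v vt comb s by unfold_locales
  define kk where "kk = j - j'"
  have kkj: "kk \<le> j" "j - kk = j'" "m - j' = m - j + kk" using jj' j1 unfolding kk_def by auto
  obtain W \<beta> where H: "W \<in> Ost kk (Suc m) \<and> (\<forall>i<kk. \<forall>a<m - j. dot (Suc m) (v a) (W i) = 0) \<and> (\<forall>i\<ge>kk. \<beta> i = 0)
   \<and> (\<forall>x. (\<forall>a<m - (j - kk). dot (Suc m) (fst (rep_of (p (j - kk))) a) x = snd (rep_of (p (j - kk))) a) \<longleftrightarrow>
          ((\<forall>a<m - j. dot (Suc m) (v a) x = \<alpha> a) \<and> (\<forall>i<kk. dot (Suc m) (W i) x = \<beta> i)))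
   \<and> (\<forall>u. (\<forall>a<m - (j - kk). dot (Suc m) (fst (rep_of (p (j - kk))) a) u = 0) \<longleftrightarrow>
          ((\<forall>a<m - j. dot (Suc m) (v a) u = 0) \<and> (\<forall>i<kk. dot (Suc m) (W i) u = 0)))
   \<and> sqn (m - (j - kk)) (snd (rep_of (p (j - kk)))) = sqn (m - j) \<alpha> + sqn kk \<beta>"
    using chain[OF P C jm zj kkj(1)] by (elim exE) (erule that)
  define z' where "z' = rep_of (p j')"
  have W: "W \<in> Ost kk (Suc m)" using H by (elim conjE) assumption
  have Wv: "\<forall>i<kk. \<forall>a<m - j. dot (Suc m) (v a) (W i) = 0" using H by (elim conjE) assumption
  have \<beta>0: "\<forall>i\<ge>kk. \<beta> i = 0" using H by (elim conjE) assumption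
  have cs: "\<forall>x. (\<forall>a<m - j'. dot (Suc m) (fst z' a) x = snd z' a) \<longleftrightarrow>
          ((\<forall>a<m - j. dot (Suc m) (v a) x = \<alpha> a) \<and> (\<forall>i<kk. dot (Suc m) (W i) x = \<beta> i))"
    using H unfolding kkj(2) z'_def by (elim conjE) assumption
  have sq: "sqn (m - j') (snd z') = sqn (m - j) \<alpha> + sqn kk \<beta>"
    using H unfolding kkj(2) z'_def by (elim conjE) assumption
  have z'M: "z' \<in> Mset geo m j'" unfolding z'_def by (rule rep_Mset[OF Pj'])
  define Xc where "Xc = {x \<in> Sph m. \<forall>a<m - j'. dot (Suc m) (fst z' a) x = snd z' a}"
  have Xsub: "subsphP m j' (p j') = Xc" unfolding Xc_def z'_def by (rule subsphP_eq[OF Pj'])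
  have XY: "Xc = {x \<in> F.Y. \<forall>i<kk. dot (Suc m) (W i) x = \<beta> i}"
    unfolding Xc_def F.Y_def using cs by auto
  have XsY: "Xc \<subseteq> F.Y" using XY by auto
  define U where "U = (\<lambda>i. if i < kk then tmul m j vt (W i) else (\<lambda>_. 0))"
  define \<beta>2 where "\<beta>2 = (\<lambda>i. \<beta> i / F.\<rho>)"
  define T where "T = {z \<in> Sph j. \<forall>i<kk. dot (Suc j) (U i) z = \<beta>2 i}"
  have Wi: "inR (Suc m) (W i)" if "i < kk" for i using W that by (simp add: Ost_def)
  have UU: "dot (Suc j) (U i) (tmul m j vt x) = dot (Suc m) (W i) x" if "i < kk" for i x
    using F.tmul_dot[OF Wi[OF that], of x] Wv that by (simp add: U_def)
  have \<rho>2: "F.\<rho>^2 = 1 - sqn (m - j) \<alpha>" by (rule F.\<rho>_sq)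
  have \<rho>p: "F.\<rho> > 0" by (rule F.\<rho>_pos)
  have UM: "(U, \<beta>2) \<in> Mset geo j j'"
  proof -
    have Uo: "U \<in> Ost kk (Suc j)"
    proof -
      have "\<forall>a<kk. \<forall>b<kk. dot (Suc j) (U a) (U b) = (if a = b then 1 else 0)"
      proof (intro allI impI)
        fix a b assume a: "a < kk" and b: "b < kk"
        have "dot (Suc j) (U a) (U b) = dot (Suc m) (W a) (W b)" using UU[OF a, of "W b"] b by (simp add: U_def)
        then show "dot (Suc j) (U a) (U b) = (if a = b then 1 else 0)" using W a b by (simp add: Ost_def)
      qed
      then show ?thesis by (simp add: Ost_def U_def tmul_def inR_def)
    qed
    have bz: "\<forall>a\<ge>kk. \<beta>2 a = 0" using \<beta>0 by (simp add: \<beta>2_def)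
    have sq2: "sqn kk \<beta>2 = sqn kk \<beta> / F.\<rho>^2" unfolding \<beta>2_def by (rule sqn_div)
    have cond: "if j' = 0 then sqn kk \<beta>2 = 1 else if geo then (\<forall>a. \<beta>2 a = 0) else sqn kk \<beta>2 < 1"
    proof (cases "j' = 0")
      case True
      then have "sqn (m - j') (snd z') = 1" using Mset_props(3)[OF z'M] by simp
      then have "sqn kk \<beta> = F.\<rho>^2" using sq \<rho>2 by simp
      then show ?thesis using True sq2 \<rho>p by simp
    next
      case False
      show ?thesis
      proof (cases geo)
        case True
        then have "sqn (m - j') (snd z') = 0" using Mset_props(4)[OF z'M False] by (simp add: sqn_def)
        then have "sqn kk \<beta> = 0" using sq sqn_nonneg[of "m - j" \<alpha>] sqn_nonneg[of kk \<beta>] by simp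
        then have "\<forall>i\<in>{..<kk}. (\<beta> i)^2 = 0" unfolding sqn_def by (subst sum_nonneg_eq_0_iff[symmetric]) auto
        then have "\<forall>a. \<beta>2 a = 0" using \<beta>0 unfolding \<beta>2_def by (metis lessThan_iff linorder_not_le power_eq_0_iff div_0)
        then show ?thesis using False True by simp
      next
        case ng: False
        then have "sqn (m - j') (snd z') < 1" using Mset_props(5)[OF z'M False] by simp
        then have "sqn kk \<beta> < F.\<rho>^2" using sq \<rho>2 by simp
        then show ?thesis using False ng sq2 \<rho>p by simp
      qed
    qed
    have e: "j - j' = kk" by (simp add: kk_def)
    show ?thesis unfolding Mset_def e using Uo bz cond by (simp only: mem_Collect_eq prod.case)
  qed
  have gX: "F.gm ` Xc = T"
  proof
    show "F.gm ` Xc \<subseteq> T"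
    proof
      fix z assume "z \<in> F.gm ` Xc"
      then obtain x where x: "x \<in> Xc" and zx: "z = F.gm x" by auto
      have xY: "x \<in> F.Y" using x XsY by auto
      have "dot (Suc j) (U i) z = \<beta>2 i" if "i < kk" for i
      proof -
        have "dot (Suc j) (U i) z = dot (Suc j) (U i) (tmul m j vt x) / F.\<rho>"
          unfolding zx F.gm_def by (simp add: dot_div_right)
        then show ?thesis using UU[OF that] x XY that by (simp add: \<beta>2_def)
      qed
      then show "z \<in> T" unfolding T_def using F.gm_Sph[OF xY] zx by simp
    qed
    show "T \<subseteq> F.gm ` Xc"
    proof
      fix z assume z: "z \<in> T"
      have zS: "z \<in> Sph j" using z by (simp add: T_def)
      have xY: "F.gi z \<in> F.Y" by (rule F.gi_Y[OF zS])
      have "dot (Suc m) (W i) (F.gi z) = \<beta> i" if "i < kk" for i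
      proof -
        have wv: "\<forall>a<m - j. dot (Suc m) (v a) (W i) = 0" using Wv that by simp
        have "dot (Suc j) (U i) z = (\<Sum>c<Suc j. z c * dot (Suc m) (W i) (vt c))"
          using that by (simp add: U_def dot_def tmul_def dot_commute[of "Suc m" "vt _"] mult.commute)
        then have "dot (Suc m) (W i) (F.gi z) = F.\<rho> * \<beta>2 i"
          using F.gi_w[OF wv, of z] z that by (simp add: T_def)
        then show ?thesis using \<rho>p by (simp add: \<beta>2_def)
      qed
      then have "F.gi z \<in> Xc" using XY xY by simp
      moreover have "F.gm (F.gi z) = z" using F.gm_gi zS by (simp add: Sph_def)
      ultimately show "z \<in> F.gm ` Xc" by (metis image_eqI)
    qed
  qed
  have gmap_eq: "gmap m j (p j) y = F.gm y" if "y \<in> F.Y" for y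
    using F.tmul_norm[OF that] unfolding gmap_def F.gm_def zj fst_conv vt_def[symmetric] by (simp add: Let_def)
  have ginv_eq: "ginv m j (p j) z = F.gi z" for z
    unfolding ginv_def F.gi_def F.cen_def F.\<rho>_def zj by (simp add: Let_def vt_def)
  have imgT: "gmap m j (p j) ` subsphP m j' (p j') = T"
    unfolding Xsub gX[symmetric] using XsY gmap_eq by (auto intro!: image_cong)
  have exP: "\<exists>P'. P' \<in> Pset geo j j' \<and> subsphP j j' P' = gmap m j (p j) ` subsphP m j' (p j')"
  proof -
    define P0 where "P0 = orbit kk (U, \<beta>2)"
    have P0P: "P0 \<in> Pset geo j j'" unfolding P0_def Pset_def kk_def using UM by blast
    have r0: "rep_of P0 \<in> orbit (j - j') (U, \<beta>2)" using Pset_rep[OF P0P] unfolding P0_def kk_def .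
    have "subsphP j j' P0 = T"
      unfolding subsphP_eq[OF P0P] T_def using orbit_cset[OF r0] by (simp add: kk_def)
    then show ?thesis using P0P imgT by blast
  qed
  define P'' where "P'' = image_class geo m j j' (p j) (p j')"
  have P''P: "P'' \<in> Pset geo j j'" and P''T: "subsphP j j' P'' = T"
    using someI_ex[OF exP] imgT unfolding P''_def image_class_def by auto
  define y where "y = projP m j (p j) q"
  have qR: "inR (Suc m) q" using qS by (simp add: Sph_def)
  have Nj: "vnorm (Suc m) (residual m (m - j) v q) \<noteq> 0"
    using assms(8) j1 zj by (simp add: projP_ok_def proj_ok_def)
  have yeq: "y = proj m j (v, \<alpha>) q" unfolding y_def projP_def zj ..
  have yY: "y \<in> F.Y" unfolding yeq by (rule F.proj_facts(1)[OF qR Nj])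
  define w where "w = projP m j' (p j') q"
  have weq: "w = proj m j' z' q" unfolding w_def projP_def z'_def ..
  define z'' where "z'' = rep_of P''"
  have z''M: "z'' \<in> Mset geo j j'" unfolding z''_def by (rule rep_Mset[OF P''P])
  have LHS: "pi_btw geo m j j' (p j) (p j') y = F.gi (proj j j' z'' (F.gm y))"
    unfolding pi_btw_def ginv_eq gmap_eq[OF yY] P''_def[symmetric] projP_def z''_def ..
  have key: "proj j j' z'' (F.gm y) = F.gm w"
  proof (cases "j' = 0")
    case True
    have s1: "sqn (j - j') (snd z'') = 1" using Mset_props(3)[OF z''M True] .
    have pz: "proj j j' z'' (F.gm y) = lin (fst z'') (snd z'') j"
      using s1 True by (simp add: proj_def)
    have "subsphP j j' P'' = {lin (fst z'') (snd z'') j}"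
      using True unfolding subsphP_def z''_def by (simp add: subsph_def)
    moreover have s2: "sqn (m - j') (snd z') = 1" using Mset_props(3)[OF z'M True] .
    have "w = lin (fst z') (snd z') m" unfolding weq using s2 True by (simp add: proj_def)
    moreover have "Xc = {lin (fst z') (snd z') m}"
      using Xsub True unfolding subsphP_def z'_def by (simp add: subsph_def)
    ultimately have "T = {lin (fst z'') (snd z'') j}" "T = {F.gm w}" using P''T gX by auto
    then show ?thesis using pz by simp
  next
    case False
    have V'': "fst z'' \<in> Ost (j - j') (Suc j)" using Mset_props(1)[OF z''M] .
    have s'': "sqn (j - j') (snd z'') \<le> 1"
    proof (cases geo)
      case True then show ?thesis using Mset_props(4)[OF z''M False] by (simp add: sqn_def)
    qed (use Mset_props(5)[OF z''M False] in simp)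
    have N'': "vnorm (Suc j) (residual j (j - j') (fst z'') (F.gm y)) \<noteq> 0"
      using assms(9) False gmap_eq[OF yY]
      unfolding pi_btw_ok_def projP_ok_def proj_ok_def P''_def[symmetric] z''_def y_def by simp
    note am2 = argmax[OF V'' s'' F.gm_inR N'']
    have T'': "T = {x \<in> Sph j. \<forall>a<j - j'. dot (Suc j) (fst z'' a) x = snd z'' a}"
      using P''T False unfolding subsphP_def z''_def by (simp add: subsph_def)
    have pT: "proj j j' z'' (F.gm y) \<in> T" unfolding T'' using am2(1,2) by (simp add: proj_def)
    have pmax: "\<And>t. t \<in> T \<Longrightarrow> t \<noteq> proj j j' z'' (F.gm y) \<Longrightarrow>
        dot (Suc j) (F.gm y) t < dot (Suc j) (F.gm y) (proj j j' z'' (F.gm y))"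
      unfolding T'' using am2(3) by (simp add: proj_def)
    have V': "fst z' \<in> Ost (m - j') (Suc m)" using Mset_props(1)[OF z'M] .
    have s': "sqn (m - j') (snd z') \<le> 1"
    proof (cases geo)
      case True then show ?thesis using Mset_props(4)[OF z'M False] by (simp add: sqn_def)
    qed (use Mset_props(5)[OF z'M False] in simp)
    have N': "vnorm (Suc m) (residual m (m - j') (fst z') q) \<noteq> 0"
      using assms(10) False unfolding projP_ok_def proj_ok_def z'_def by simp
    note am1 = argmax[OF V' s' qR N']
    have wX: "w \<in> Xc" unfolding Xc_def weq using am1(1,2) by (simp add: proj_def)
    have wmax: "\<And>x. x \<in> Xc \<Longrightarrow> x \<noteq> w \<Longrightarrow> dot (Suc m) q x < dot (Suc m) q w"
      unfolding Xc_def weq using am1(3) by (simp add: proj_def)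
    define K where "K = (\<Sum>a<m - j. dot (Suc m) (v a) q * \<alpha> a)"
    define NN where "NN = vnorm (Suc m) (residual m (m - j) v q)"
    have NNp: "NN > 0" using Nj unfolding NN_def vnorm_def using dot_self_nonneg by (simp add: less_le)
    have rel: "dot (Suc j) (F.gm y) (F.gm x) = (dot (Suc m) q x - K) / (F.\<rho> * NN)" if "x \<in> F.Y" for x
    proof -
      have "dot (Suc j) (F.gm y) (F.gm x) = (dot (Suc m) y x - sqn (m - j) \<alpha>) / F.\<rho>^2"
        by (rule F.gm_dot[OF yY that])
      also have "dot (Suc m) y x = sqn (m - j) \<alpha> + F.\<rho> / NN * (dot (Suc m) q x - K)"
        unfolding yeq K_def NN_def by (rule F.proj_facts(2)[OF qR Nj that])
      finally have "dot (Suc j) (F.gm y) (F.gm x) = (F.\<rho> / NN * (dot (Suc m) q x - K)) / F.\<rho>^2" by simp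
      moreover have "(a / b * X) / a^2 = X / (a * b)" if "a \<noteq> 0" "b \<noteq> 0" for a b X :: real
        using that by (simp add: power2_eq_square field_simps)
      ultimately show ?thesis using \<rho>p NNp by simp
    qed
    show ?thesis
    proof (rule ccontr)
      assume ne: "proj j j' z'' (F.gm y) \<noteq> F.gm w"
      have gwT: "F.gm w \<in> T" using wX gX by auto
      obtain x where x: "x \<in> Xc" and px: "proj j j' z'' (F.gm y) = F.gm x" using pT gX by auto
      have lt: "dot (Suc j) (F.gm y) (F.gm w) < dot (Suc j) (F.gm y) (F.gm x)"
        using pmax[OF gwT] ne px by metis
      have xY: "x \<in> F.Y" and wY: "w \<in> F.Y" using x wX XsY by auto
      have "dot (Suc m) q w < dot (Suc m) q x"
        using lt rel[OF xY] rel[OF wY] \<rho>p NNp by (simp add: divide_strict_right_mono_neg divide_less_cancel)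
      moreover have "x \<noteq> w" using ne px by auto
      ultimately show False using wmax[OF x] by simp
    qed
  qed
  have wY: "w \<in> F.Y"
  proof (cases "j' = 0")
    case True
    have s2: "sqn (m - j') (snd z') = 1" using Mset_props(3)[OF z'M True] .
    have "w = lin (fst z') (snd z') m" unfolding weq using s2 True by (simp add: proj_def)
    moreover have "Xc = {lin (fst z') (snd z') m}"
      using Xsub True unfolding subsphP_def z'_def by (simp add: subsph_def)
    ultimately show ?thesis using XsY by auto
  next
    case False
    have V': "fst z' \<in> Ost (m - j') (Suc m)" using Mset_props(1)[OF z'M] .
    have s': "sqn (m - j') (snd z') \<le> 1"
    proof (cases geo)
      case True then show ?thesis using Mset_props(4)[OF z'M False] by (simp add: sqn_def)
    qed (use Mset_props(5)[OF z'M False] in simp)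
    have N': "vnorm (Suc m) (residual m (m - j') (fst z') q) \<noteq> 0"
      using assms(10) False unfolding projP_ok_def proj_ok_def z'_def by simp
    have "w \<in> Xc" unfolding Xc_def weq using argmax(1,2)[OF V' s' qR N'] by (simp add: proj_def)
    then show ?thesis using XsY by auto
  qed
  show ?thesis using LHS key F.gi_gm[OF wY] unfolding y_def w_def by simp
qed

end
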